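(* Let $\Theta$ be a finite set, let $(A,u)$ be a decision problem and let $P_1,\dots,P_m$ be experiments. Then there exists a weak decomposition $(A_1^*,u_1^* ),\dots,(A_k^*,u_k^* )$ of $(A,u)$ (with finite action sets) such that $$V(P_1,\dots,P_m;(A,u))=\sum_{\ell=1}^k\max_{j=1,\dots,m}V(P_j;(A_\ell^*,u_\ell^* )).$$
   Context: $\Theta$ is a finite set of states. A decision problem is a pair $(A,u)$ with $A$ a finite nonempty action set and $u:\Theta\times A\to\mathbb{R}$; for $\alpha\in\Delta(A)$ write $u(\theta,\alpha)=\sum_a\alpha(a)u(\theta,a)$. An experiment is a map $P:\Theta\to\Delta(Y)$ with $Y$ a finite signal set. Given experiments $P_j:\Theta\to\Delta(Y_j)$, $j=1,\dots,m$, let $\mathbf Y=Y_1\times\cdots\times Y_m$ and let $\mathcal P(P_1,\dots,P_m)$ be the set of experiments $P:\Theta\to\Delta(\mathbf Y)$ whose $j$-th marginal is $P_j(\cdot|\theta)$ for every $\theta$ and $j$. A strategy is a map $\sigma:\mathbf Y\to\Delta(A)$. Define $V(P_1,\dots,P_m;(A,u))=\max_{\sigma}\min_{P\in\mathcal P(P_1,\dots,P_m)}\sum_{\theta}\sum_{\mathbf y}P(\mathbf y|\theta)u(\theta,\sigma(\mathbf y))$; for a single experiment, $V(P;(A,u))=\max_{\sigma:Y\to\Delta(A)}\sum_\theta\sum_y P(y|\theta)u(\theta,\sigma(y))$. The composition $\bigoplus_{\ell=1}^k(A_\ell,u_\ell)$ is the decision problem with action set $A_1\times\cdots\times A_k$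 and utility $u(\theta,(a_1,\dots,a_k))=\sum_\ell u_\ell(\theta,a_\ell)$. For a decision problem let $\mathcal H(A,u)=\mathrm{co}\{u(\cdot,a):a\in A\}-\mathbb{R}_+^{\Theta}$ (Minkowski difference). A decision problem $(A,u)$ admits a weak decomposition $\{(A_\ell,u_\ell)\}_{\ell=1}^k$ if $\mathcal H(\bigoplus_{\ell=1}^k(A_\ell,u_\ell))\subseteq\mathcal H(A,u)$. *)

theory Defs
  imports "HOL-Analysis.Analysis"
begin

definition is_dist :: "'b set \<Rightarrow> ('b \<Rightarrow> real) \<Rightarrow> bool" where
  "is_dist S p \<longleftrightarrow> (\<forall>x. 0 \<le> p x) \<and> (\<forall>x. x \<notin> S \<longrightarrow> p x = 0) \<and> sum p S = 1"

definition is_experiment :: "'y set \<Rightarrow> ('th \<Rightarrow> 'y \<Rightarrow> real) \<Rightarrow> bool" where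
  "is_experiment Y P \<longleftrightarrow> finite Y \<and> (\<forall>th. is_dist Y (P th))"

definition decision_problem :: "'a set \<Rightarrow> bool" where
  "decision_problem A \<longleftrightarrow> finite A \<and> A \<noteq> {}"

definition exp_util :: "'a set \<Rightarrow> ('th \<Rightarrow> 'a \<Rightarrow> real) \<Rightarrow> 'th \<Rightarrow> ('a \<Rightarrow> real) \<Rightarrow> real" where
  "exp_util A u th alpha = (\<Sum>a\<in>A. alpha a * u th a)"

definition profiles :: "nat \<Rightarrow> (nat \<Rightarrow> 'y set) \<Rightarrow> (nat \<Rightarrow> 'y) set" where
  "profiles m Y = PiE {..<m} Y"

definition couplings :: "nat \<Rightarrow> (nat \<Rightarrow> 'y set) \<Rightarrow> (nat \<Rightarrow> 'th \<Rightarrow> 'y \<Rightarrow> real)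
    \<Rightarrow> ('th \<Rightarrow> (nat \<Rightarrow> 'y) \<Rightarrow> real) set" where
  "couplings m Y Pj = {P. \<forall>th. is_dist (profiles m Y) (P th) \<and>
      (\<forall>j<m. \<forall>y. (\<Sum>ys\<in>{ys\<in>profiles m Y. ys j = y}. P th ys) = Pj j th y)}"

definition strategies :: "'s set \<Rightarrow> 'a set \<Rightarrow> ('s \<Rightarrow> 'a \<Rightarrow> real) set" where
  "strategies S A = {sigma. \<forall>s\<in>S. is_dist A (sigma s)}"

definition Vjoint :: "'a set \<Rightarrow> ('th::finite \<Rightarrow> 'a \<Rightarrow> real) \<Rightarrow> nat \<Rightarrow> (nat \<Rightarrow> 'y set)
    \<Rightarrow> (nat \<Rightarrow> 'th \<Rightarrow> 'y \<Rightarrow> real) \<Rightarrow> real" where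
  "Vjoint A u m Y Pj = (SUP sigma\<in>strategies (profiles m Y) A.
      INF P\<in>couplings m Y Pj.
        (\<Sum>th\<in>UNIV. \<Sum>ys\<in>profiles m Y. P th ys * exp_util A u th (sigma ys)))"

definition Vsingle :: "'a set \<Rightarrow> ('th::finite \<Rightarrow> 'a \<Rightarrow> real) \<Rightarrow> 'y set
    \<Rightarrow> ('th \<Rightarrow> 'y \<Rightarrow> real) \<Rightarrow> real" where
  "Vsingle A u Y P = (SUP sigma\<in>strategies Y A.
        (\<Sum>th\<in>UNIV. \<Sum>y\<in>Y. P th y * exp_util A u th (sigma y)))"

definition Hset :: "'a set \<Rightarrow> ('th::finite \<Rightarrow> 'a \<Rightarrow> real) \<Rightarrow> (real^'th) set" where
  "Hset A u = {y - z | y z. y \<in> convex hull ((\<lambda>a. \<chi> th. u th a) ` A) \<and> (\<forall>th. 0 \<le> z $ th)}"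

definition comp_actions :: "nat \<Rightarrow> (nat \<Rightarrow> 'b set) \<Rightarrow> (nat \<Rightarrow> 'b) set" where
  "comp_actions k Ac = PiE {..<k} Ac"

definition comp_util :: "nat \<Rightarrow> (nat \<Rightarrow> 'th \<Rightarrow> 'b \<Rightarrow> real) \<Rightarrow> 'th \<Rightarrow> (nat \<Rightarrow> 'b) \<Rightarrow> real" where
  "comp_util k uc th a = (\<Sum>l<k. uc l th (a l))"

definition weak_decomposition :: "'a set \<Rightarrow> ('th::finite \<Rightarrow> 'a \<Rightarrow> real) \<Rightarrow> nat
    \<Rightarrow> (nat \<Rightarrow> 'b set) \<Rightarrow> (nat \<Rightarrow> 'th \<Rightarrow> 'b \<Rightarrow> real) \<Rightarrow> bool" where
  "weak_decomposition A u k Ac uc \<longleftrightarrow> (\<forall>l<k. decision_problem (Ac l)) \<and>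
     Hset (comp_actions k Ac) (comp_util k uc) \<subseteq> Hset A u"

end

theory Submission
  imports Defs
begin


lemma farkas_nat:
  fixes I :: "'i set" and a :: "nat \<Rightarrow> 'i \<Rightarrow> real" and b :: "nat \<Rightarrow> real"
  assumes "finite I"
  shows "finite (K::nat set) \<Longrightarrow> \<not>(\<exists>x. \<forall>k\<in>K. (\<Sum>i\<in>I. a k i * x i) \<le> b k) \<Longrightarrow>
    \<exists>y. (\<forall>k\<in>K. 0 \<le> y k) \<and> (\<forall>i\<in>I. (\<Sum>k\<in>K. y k * a k i) = 0) \<and> (\<Sum>k\<in>K. y k * b k) < 0"
  using assms
proof (induction I arbitrary: K a b rule: finite_induct)
  case empty
  have "\<not>(\<forall>k\<in>K. 0 \<le> b k)" using empty(2) by simp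
  then obtain k0 where k0: "k0 \<in> K" "b k0 < 0" by (auto simp: not_le)
  have d: "(\<Sum>k\<in>K. (if k = k0 then 1 else 0) * f k) = f k0" for f :: "nat \<Rightarrow> real"
  proof -
    have "(\<Sum>k\<in>K. (if k = k0 then 1 else 0) * f k) = (\<Sum>k\<in>K. if k = k0 then f k else 0)"
      by (intro sum.cong) auto
    also have "\<dots> = f k0" using k0 empty by (simp add: sum.delta)
    finally show ?thesis .
  qed
  show ?case
    by (rule exI[of _ "\<lambda>k. if k = k0 then 1 else 0"]) (use k0 d in auto)
next
  case (insert i0 I)
  define K0 where "K0 = {k\<in>K. a k i0 = 0}"
  define Kp where "Kp = {k\<in>K. a k i0 > 0}"
  define Kn where "Kn = {k\<in>K. a k i0 < 0}"
  define enc1 :: "nat \<times> nat \<Rightarrow> nat" where "enc1 = (\<lambda>c. 2 * prod_encode c + 1)"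
  define comb :: "(nat \<Rightarrow> real) \<Rightarrow> nat \<Rightarrow> nat \<Rightarrow> real" where
    "comb = (\<lambda>f p n. (- a n i0) * f p + a p i0 * f n)"
  define lift :: "(nat \<Rightarrow> real) \<Rightarrow> nat \<Rightarrow> real" where
    "lift = (\<lambda>f k. if even k then f (k div 2) else comb f (fst (prod_decode (k div 2))) (snd (prod_decode (k div 2))))"
  define K' where "K' = (\<lambda>k. 2 * k) ` K0 \<union> enc1 ` (Kp \<times> Kn)"
  define a' where "a' = (\<lambda>k j. lift (\<lambda>k. a k j) k)"
  define b' where "b' = lift b"
  have fin: "finite K0" "finite Kp" "finite Kn" using insert.prems(1) by (auto simp: K0_def Kp_def Kn_def)
  have finK': "finite K'" using fin by (simp add: K'_def)
  have Kdecomp: "K = K0 \<union> Kp \<union> Kn" by (auto simp: K0_def Kp_def Kn_def)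
  have lift0: "lift f (2 * k) = f k" for f k by (simp add: lift_def)
  have lift1: "lift f (enc1 (p, n)) = comb f p n" for f p n by (simp add: lift_def enc1_def)
  have lift1': "lift f (enc1 c) = comb f (fst c) (snd c)" for f c by (cases c) (simp add: lift1)
  have inj1: "inj_on enc1 X" for X by (auto simp: inj_on_def enc1_def)
  have inj0: "inj_on (\<lambda>k::nat. 2 * k) X" for X by (auto simp: inj_on_def)
  have disj: "(\<lambda>k. 2 * k) ` K0 \<inter> enc1 ` (Kp \<times> Kn) = {}" by (auto simp: enc1_def) presburger
  have sumK': "(\<Sum>k\<in>K'. z k * lift f k) = (\<Sum>k\<in>K0. z (2*k) * f k) + (\<Sum>c\<in>Kp \<times> Kn. z (enc1 c) * comb f (fst c) (snd c))" for z f
    unfolding K'_def using fin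
    by (simp add: sum.union_disjoint disj sum.reindex inj0 inj1 lift0 lift1')
  have nf: "\<not>(\<exists>x. \<forall>k\<in>K'. (\<Sum>j\<in>I. a' k j * x j) \<le> b' k)"
  proof
    assume "\<exists>x. \<forall>k\<in>K'. (\<Sum>j\<in>I. a' k j * x j) \<le> b' k"
    then obtain x where x: "\<forall>k\<in>K'. (\<Sum>j\<in>I. a' k j * x j) \<le> b' k" by blast
    define r where "r = (\<lambda>k. \<Sum>j\<in>I. a k j * x j)"
    have r0: "r k \<le> b k" if "k \<in> K0" for k
      using x[rule_format, of "2*k"] that by (simp add: K'_def a'_def b'_def lift0 r_def)
    have rpn: "comb r p n \<le> comb b p n" if "p \<in> Kp" "n \<in> Kn" for p n
    proof -
      have "enc1 (p,n) \<in> K'" using that by (auto simp: K'_def)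
      moreover have "(\<Sum>j\<in>I. a' (enc1 (p,n)) j * x j) = comb r p n"
        by (simp add: a'_def lift1 r_def comb_def sum.distrib sum_distrib_left distrib_right mult.assoc
             sum_subtractf[symmetric] left_diff_distrib)
      ultimately show ?thesis using x[rule_format, of "enc1 (p,n)"] by (simp add: b'_def lift1)
    qed
    define U where "U = (\<lambda>p. (b p - r p) / a p i0)"
    define L where "L = (\<lambda>n. (b n - r n) / a n i0)"
    have LU: "L n \<le> U p" if "p \<in> Kp" "n \<in> Kn" for p n
    proof -
      have ap: "a p i0 > 0" and an: "a n i0 < 0" using that by (auto simp: Kp_def Kn_def)
      have "a p i0 * (r n - b n) \<le> (- a n i0) * (b p - r p)"
        using rpn[OF that] by (simp add: comb_def algebra_simps)
      then show ?thesis using ap an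
        by (simp add: U_def L_def field_simps)
    qed
    define t where "t = (if Kp = {} then (if Kn = {} then 0 else Max (L ` Kn)) else Min (U ` Kp))"
    have tU: "t \<le> U p" if "p \<in> Kp" for p
      using that fin by (auto simp: t_def)
    have tL: "L n \<le> t" if "n \<in> Kn" for n
    proof (cases "Kp = {}")
      case True then show ?thesis using that fin by (auto simp: t_def)
    next
      case False
      then have "Min (U ` Kp) \<in> U ` Kp" using fin by auto
      then obtain p where "p \<in> Kp" "Min (U ` Kp) = U p" by auto
      then show ?thesis using LU[of p n] that False by (simp add: t_def)
    qed
    define x' where "x' = x(i0 := t)"
    have "\<forall>k\<in>K. (\<Sum>i\<in>insert i0 I. a k i * x' i) \<le> b k"
    proof
      fix k assume k: "k \<in> K"
      have eq: "(\<Sum>i\<in>insert i0 I. a k i * x' i) = a k i0 * t + r k"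
      proof -
        have "(\<Sum>i\<in>I. a k i * x' i) = r k"
          unfolding r_def x'_def using insert.hyps by (intro sum.cong) auto
        then show ?thesis using insert.hyps by (simp add: x'_def)
      qed
      show "(\<Sum>i\<in>insert i0 I. a k i * x' i) \<le> b k"
      proof -
        consider "k \<in> K0" | "k \<in> Kp" | "k \<in> Kn" using k Kdecomp by blast
        then show ?thesis
        proof cases
          case 1 then show ?thesis using r0[OF 1] eq by (simp add: K0_def)
        next
          case 2
          have ap: "a k i0 > 0" using 2 by (simp add: Kp_def)
          have "t \<le> (b k - r k) / a k i0" using tU[OF 2] by (simp add: U_def)
          then have "a k i0 * t \<le> b k - r k" using ap by (simp add: field_simps)
          then show ?thesis using eq by simp
        next
          case 3
          have an: "a k i0 < 0" using 3 by (simp add: Kn_def)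
          have "(b k - r k) / a k i0 \<le> t" using tL[OF 3] by (simp add: L_def)
          then have "a k i0 * t \<le> b k - r k" using an by (simp add: field_simps)
          then show ?thesis using eq by simp
        qed
      qed
    qed
    then show False using insert.prems(2) by blast
  qed
  obtain y' where y'0: "\<forall>k\<in>K'. 0 \<le> y' k" and y'a: "\<forall>j\<in>I. (\<Sum>k\<in>K'. y' k * a' k j) = 0"
    and y'b: "(\<Sum>k\<in>K'. y' k * b' k) < 0"
    using insert.IH[OF finK' nf] by blast
  define y where "y = (\<lambda>k. (if k \<in> K0 then y' (2*k) else 0)
      + (if k \<in> Kp then (\<Sum>n\<in>Kn. y' (enc1 (k,n)) * (- a n i0)) else 0)
      + (if k \<in> Kn then (\<Sum>p\<in>Kp. y' (enc1 (p,k)) * a p i0) else 0))"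
  have key: "(\<Sum>k\<in>K. y k * f k) = (\<Sum>k\<in>K'. y' k * lift f k)" for f
  proof -
    have d1: "K0 \<inter> Kp = {}" "K0 \<inter> Kn = {}" "Kp \<inter> Kn = {}" by (auto simp: K0_def Kp_def Kn_def)
    have "(\<Sum>k\<in>K. y k * f k) = (\<Sum>k\<in>K0. y k * f k) + (\<Sum>k\<in>Kp. y k * f k) + (\<Sum>k\<in>Kn. y k * f k)"
      unfolding Kdecomp using fin d1 by (simp add: sum.union_disjoint Int_Un_distrib2)
    also have "(\<Sum>k\<in>K0. y k * f k) = (\<Sum>k\<in>K0. y' (2*k) * f k)"
      using d1 by (intro sum.cong) (auto simp: y_def)
    also have "(\<Sum>k\<in>Kp. y k * f k) = (\<Sum>p\<in>Kp. \<Sum>n\<in>Kn. y' (enc1 (p,n)) * ((- a n i0) * f p))"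
      using d1 by (intro sum.cong) (auto simp: y_def sum_distrib_right mult.assoc)
    also have "(\<Sum>k\<in>Kn. y k * f k) = (\<Sum>n\<in>Kn. \<Sum>p\<in>Kp. y' (enc1 (p,n)) * (a p i0 * f n))"
      using d1 by (intro sum.cong) (auto simp: y_def sum_distrib_right mult.assoc)
    also have "\<dots> = (\<Sum>p\<in>Kp. \<Sum>n\<in>Kn. y' (enc1 (p,n)) * (a p i0 * f n))"
      by (rule sum.swap)
    finally have A: "(\<Sum>k\<in>K. y k * f k) = (\<Sum>k\<in>K0. y' (2*k) * f k)
       + (\<Sum>p\<in>Kp. \<Sum>n\<in>Kn. y' (enc1 (p,n)) * ((- a n i0) * f p))
       + (\<Sum>p\<in>Kp. \<Sum>n\<in>Kn. y' (enc1 (p,n)) * (a p i0 * f n))" .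
    have B: "(\<Sum>c\<in>Kp \<times> Kn. y' (enc1 c) * comb f (fst c) (snd c)) =
       (\<Sum>p\<in>Kp. \<Sum>n\<in>Kn. y' (enc1 (p,n)) * ((- a n i0) * f p))
       + (\<Sum>p\<in>Kp. \<Sum>n\<in>Kn. y' (enc1 (p,n)) * (a p i0 * f n))"
      proof -
      have cp: "(\<Sum>p\<in>Kp. \<Sum>n\<in>Kn. G p n) = (\<Sum>c\<in>Kp \<times> Kn. G (fst c) (snd c))" for G :: "nat \<Rightarrow> nat \<Rightarrow> real"
        by (simp add: sum.cartesian_product split_beta)
      show ?thesis unfolding cp
        by (simp only: comb_def distrib_left sum.distrib prod.collapse)
    qed
    show ?thesis unfolding A sumK' B by simp
  qed
  show ?case
  proof (intro exI conjI ballI)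
    fix k assume "k \<in> K"
    have "0 \<le> y' (2*k)" if "k \<in> K0" using y'0 that by (auto simp: K'_def)
    moreover have "0 \<le> (\<Sum>n\<in>Kn. y' (enc1 (k,n)) * (- a n i0))" if "k \<in> Kp"
    proof (intro sum_nonneg)
      fix n assume n: "n \<in> Kn"
      then have "enc1 (k,n) \<in> K'" using that by (auto simp: K'_def)
      then have "0 \<le> y' (enc1 (k,n))" using y'0 by blast
      moreover have "0 \<le> - a n i0" using n by (simp add: Kn_def)
      ultimately show "0 \<le> y' (enc1 (k,n)) * (- a n i0)" by (rule mult_nonneg_nonneg)
    qed
    moreover have "0 \<le> (\<Sum>p\<in>Kp. y' (enc1 (p,k)) * a p i0)" if "k \<in> Kn"
    proof (intro sum_nonneg)
      fix p assume p: "p \<in> Kp"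
      then have "enc1 (p,k) \<in> K'" using that by (auto simp: K'_def)
      then have "0 \<le> y' (enc1 (p,k))" using y'0 by blast
      moreover have "0 \<le> a p i0" using p by (simp add: Kp_def)
      ultimately show "0 \<le> y' (enc1 (p,k)) * a p i0" by (rule mult_nonneg_nonneg)
    qed
    ultimately show "0 \<le> y k" unfolding y_def by auto
  next
    fix i assume i: "i \<in> insert i0 I"
    show "(\<Sum>k\<in>K. y k * a k i) = 0"
    proof (cases "i = i0")
      case True
      have "(\<Sum>k\<in>K. y k * a k i) = (\<Sum>k\<in>K0. y' (2*k) * a k i0) + (\<Sum>c\<in>Kp \<times> Kn. y' (enc1 c) * comb (\<lambda>k. a k i0) (fst c) (snd c))"
        unfolding key sumK' True ..
      also have "\<dots> = 0" by (simp add: K0_def comb_def)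
      finally show ?thesis .
    next
      case False
      then have "i \<in> I" using i by auto
      then show ?thesis using key[of "\<lambda>k. a k i"] y'a by (simp add: a'_def)
    qed
  next
    show "(\<Sum>k\<in>K. y k * b k) < 0" using key[of b] y'b by (simp add: b'_def)
  qed
qed

lemma farkas_gen:
  fixes I :: "'i set" and K :: "'k set" and a :: "'k \<Rightarrow> 'i \<Rightarrow> real" and b :: "'k \<Rightarrow> real"
  assumes "finite I" "finite K" "\<not>(\<exists>x. \<forall>k\<in>K. (\<Sum>i\<in>I. a k i * x i) \<le> b k)"
  shows "\<exists>y. (\<forall>k\<in>K. 0 \<le> y k) \<and> (\<forall>i\<in>I. (\<Sum>k\<in>K. y k * a k i) = 0) \<and> (\<Sum>k\<in>K. y k * b k) < 0"
proof -
  obtain h where h: "bij_betw h {0..<card K} K" using ex_bij_betw_nat_finite[OF assms(2)] by blast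
  have nf: "\<not>(\<exists>x. \<forall>n\<in>{0..<card K}. (\<Sum>i\<in>I. a (h n) i * x i) \<le> b (h n))"
  proof
    assume "\<exists>x. \<forall>n\<in>{0..<card K}. (\<Sum>i\<in>I. a (h n) i * x i) \<le> b (h n)"
    then obtain x where x: "\<forall>n\<in>{0..<card K}. (\<Sum>i\<in>I. a (h n) i * x i) \<le> b (h n)" by blast
    have "\<forall>k\<in>K. (\<Sum>i\<in>I. a k i * x i) \<le> b k"
    proof
      fix k assume "k \<in> K"
      then obtain n where "n \<in> {0..<card K}" "k = h n" using h unfolding bij_betw_def by blast
      then show "(\<Sum>i\<in>I. a k i * x i) \<le> b k" using x by blast
    qed
    then show False using assms(3) by blast
  qed
  obtain y' where y': "\<forall>n\<in>{0..<card K}. 0 \<le> y' n" "\<forall>i\<in>I. (\<Sum>n\<in>{0..<card K}. y' n * a (h n) i) = 0"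
    "(\<Sum>n\<in>{0..<card K}. y' n * b (h n)) < 0"
    using farkas_nat[OF assms(1) _ nf] by blast
  define g where "g = inv_into {0..<card K} h"
  have gh: "g (h n) = n" if "n \<in> {0..<card K}" for n
    using h that by (simp add: g_def bij_betw_def inv_into_f_f)
  have re: "(\<Sum>k\<in>K. y' (g k) * f k) = (\<Sum>n\<in>{0..<card K}. y' n * f (h n))" for f :: "'k \<Rightarrow> real"
    using sum.reindex_bij_betw[OF h, of "\<lambda>k. y' (g k) * f k"] gh by simp
  show ?thesis
  proof (intro exI[of _ "\<lambda>k. y' (g k)"] conjI ballI)
    fix k assume "k \<in> K"
    then have "g k \<in> {0..<card K}" unfolding g_def using h by (metis bij_betw_def inv_into_into)
    then show "0 \<le> y' (g k)" using y' by blast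
  next
    fix i assume "i \<in> I" then show "(\<Sum>k\<in>K. y' (g k) * a k i) = 0" using y' re[of "\<lambda>k. a k i"] by simp
  next
    show "(\<Sum>k\<in>K. y' (g k) * b k) < 0" using y' re[of b] by simp
  qed
qed

definition rep :: "'i set \<Rightarrow> (('i \<Rightarrow> real) \<Rightarrow> real) \<Rightarrow> bool" where
  "rep I f \<longleftrightarrow> (\<exists>c. \<forall>x. f x = (\<Sum>i\<in>I. c i * x i))"

lemma farkas_fun:
  fixes I :: "'i set" and K :: "'k set" and g :: "'k \<Rightarrow> ('i \<Rightarrow> real) \<Rightarrow> real" and b :: "'k \<Rightarrow> real"
  assumes "finite I" "finite K" "\<forall>k\<in>K. rep I (g k)" "\<not>(\<exists>x. \<forall>k\<in>K. g k x \<le> b k)"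
  shows "\<exists>y. (\<forall>k\<in>K. 0 \<le> y k) \<and> (\<forall>x. (\<Sum>k\<in>K. y k * g k x) = 0) \<and> (\<Sum>k\<in>K. y k * b k) < 0"
proof -
  have "\<forall>k\<in>K. \<exists>c. \<forall>x. g k x = (\<Sum>i\<in>I. c i * x i)"
    using assms(3) unfolding rep_def by blast
  then have "\<exists>c. \<forall>k\<in>K. \<forall>x. g k x = (\<Sum>i\<in>I. c k i * x i)" by (rule bchoice)
  then obtain c where c: "\<forall>k\<in>K. \<forall>x. g k x = (\<Sum>i\<in>I. c k i * x i)" by blast
  have "\<not>(\<exists>x. \<forall>k\<in>K. (\<Sum>i\<in>I. c k i * x i) \<le> b k)" using assms(4) c by auto
  then obtain y where y: "\<forall>k\<in>K. 0 \<le> y k" "\<forall>i\<in>I. (\<Sum>k\<in>K. y k * c k i) = 0" "(\<Sum>k\<in>K. y k * b k) < 0"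
    using farkas_gen[OF assms(1,2)] by blast
  have "(\<Sum>k\<in>K. y k * g k x) = 0" for x
  proof -
    have "(\<Sum>k\<in>K. y k * g k x) = (\<Sum>k\<in>K. \<Sum>i\<in>I. y k * c k i * x i)"
      using c by (simp add: sum_distrib_left mult.assoc)
    also have "\<dots> = (\<Sum>i\<in>I. (\<Sum>k\<in>K. y k * c k i) * x i)"
      by (subst sum.swap) (simp add: sum_distrib_right)
    also have "\<dots> = 0" using y(2) by simp
    finally show ?thesis .
  qed
  then show ?thesis using y by blast
qed

lemma rep_var: "finite I \<Longrightarrow> i0 \<in> I \<Longrightarrow> rep I (\<lambda>x. x i0)"
  unfolding rep_def
proof (intro exI[of _ "\<lambda>i. if i = i0 then 1 else 0"] allI)
  fix x :: "'a \<Rightarrow> real"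
  assume "finite I" "i0 \<in> I"
  have "(\<Sum>i\<in>I. (if i = i0 then 1 else 0) * x i) = (\<Sum>i\<in>I. if i = i0 then x i else 0)"
    by (intro sum.cong) auto
  then show "x i0 = (\<Sum>i\<in>I. (if i = i0 then 1 else 0) * x i)" using \<open>finite I\<close> \<open>i0 \<in> I\<close> by (simp add: sum.delta)
qed

lemma rep_add: "rep I f \<Longrightarrow> rep I g \<Longrightarrow> rep I (\<lambda>x. f x + g x)"
proof -
  assume "rep I f" "rep I g"
  then obtain c d where c: "\<forall>x. f x = (\<Sum>i\<in>I. c i * x i)" and d: "\<forall>x. g x = (\<Sum>i\<in>I. d i * x i)"
    unfolding rep_def by blast
  show ?thesis unfolding rep_def
    by (rule exI[of _ "\<lambda>i. c i + d i"]) (simp add: c d distrib_right sum.distrib)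
qed

lemma rep_scale: "rep I f \<Longrightarrow> rep I (\<lambda>x. r * f x)"
  unfolding rep_def
proof -
  assume "\<exists>c. \<forall>x. f x = (\<Sum>i\<in>I. c i * x i)"
  then obtain c where "\<forall>x. f x = (\<Sum>i\<in>I. c i * x i)" by blast
  then show "\<exists>c. \<forall>x. r * f x = (\<Sum>i\<in>I. c i * x i)"
    by (intro exI[of _ "\<lambda>i. r * c i"]) (simp add: sum_distrib_left mult.assoc)
qed

lemma rep_scale_r: "rep I f \<Longrightarrow> rep I (\<lambda>x. f x * r)"
  using rep_scale[of I f r] by (simp add: mult.commute)

lemma rep_neg: "rep I f \<Longrightarrow> rep I (\<lambda>x. - f x)"
  using rep_scale[of I f "-1"] by simp

lemma rep_diff: "rep I f \<Longrightarrow> rep I g \<Longrightarrow> rep I (\<lambda>x. f x - g x)"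
proof -
  assume "rep I f" "rep I g"
  then have "rep I (\<lambda>x. f x + - g x)" by (intro rep_add rep_neg)
  then show ?thesis by simp
qed

lemma rep_sum: "finite J \<Longrightarrow> (\<And>j. j \<in> J \<Longrightarrow> rep I (f j)) \<Longrightarrow> rep I (\<lambda>x. \<Sum>j\<in>J. f j x)"
proof (induction J rule: finite_induct)
  case empty then show ?case unfolding rep_def by (intro exI[of _ "\<lambda>i. 0"]) simp
next
  case (insert j J)
  have "rep I (\<lambda>x. f j x + (\<Sum>j\<in>J. f j x))"
    by (rule rep_add) (use insert in auto)
  then show ?case using insert by simp
qed



lemma dist_nonempty: "is_dist S p \<Longrightarrow> S \<noteq> {}"
  unfolding is_dist_def by auto

lemma dist_le1: "finite S \<Longrightarrow> is_dist S p \<Longrightarrow> p x \<le> 1"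
  unfolding is_dist_def
  by (metis member_le_sum zero_le_one)

lemma exp_util_bound:
  assumes "finite B" "is_dist B \<alpha>"
  shows "\<bar>exp_util B v th \<alpha>\<bar> \<le> (\<Sum>b\<in>B. \<bar>v th b\<bar>)"
proof -
  have "\<bar>exp_util B v th \<alpha>\<bar> \<le> (\<Sum>b\<in>B. \<bar>\<alpha> b * v th b\<bar>)"
    unfolding exp_util_def by (rule sum_abs)
  also have "\<dots> \<le> (\<Sum>b\<in>B. \<bar>v th b\<bar>)"
  proof (rule sum_mono)
    fix b assume "b \<in> B"
    have "0 \<le> \<alpha> b" "\<alpha> b \<le> 1" using assms dist_le1[OF assms] by (auto simp: is_dist_def)
    then show "\<bar>\<alpha> b * v th b\<bar> \<le> \<bar>v th b\<bar>"
      by (simp add: abs_mult mult_left_le_one_le)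
  qed
  finally show ?thesis .
qed

lemma avg_bound:
  assumes "finite Z" "is_dist Z p" "\<And>z. z \<in> Z \<Longrightarrow> \<bar>f z\<bar> \<le> M"
  shows "\<bar>\<Sum>z\<in>Z. p z * f z\<bar> \<le> M"
proof -
  have "\<bar>\<Sum>z\<in>Z. p z * f z\<bar> \<le> (\<Sum>z\<in>Z. p z * M)"
  proof -
    have "\<bar>\<Sum>z\<in>Z. p z * f z\<bar> \<le> (\<Sum>z\<in>Z. \<bar>p z * f z\<bar>)" by (rule sum_abs)
    also have "\<dots> \<le> (\<Sum>z\<in>Z. p z * M)"
      using assms by (intro sum_mono) (auto simp: is_dist_def abs_mult intro: mult_left_mono)
    finally show ?thesis .
  qed
  also have "\<dots> = M" using assms(2) by (simp add: is_dist_def sum_distrib_right[symmetric])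
  finally show ?thesis .
qed

lemma finite_profiles: "(\<And>j. j < m \<Longrightarrow> finite (Y j)) \<Longrightarrow> finite (profiles m Y)"
  unfolding profiles_def by (rule finite_PiE) auto

lemma profiles_mem: "ys \<in> profiles m Y \<Longrightarrow> j < m \<Longrightarrow> ys j \<in> Y j"
  unfolding profiles_def by auto

lemma marginal:
  assumes P: "P \<in> couplings m Y Pj" and j: "j < m" and fin: "\<And>j. j < m \<Longrightarrow> finite (Y j)"
  shows "(\<Sum>ys\<in>profiles m Y. P th ys * g (ys j)) = (\<Sum>y\<in>Y j. Pj j th y * g y)"
proof -
  have fS: "finite (profiles m Y)" using fin by (rule finite_profiles)
  have im: "(\<lambda>ys. ys j) ` profiles m Y \<subseteq> Y j" using profiles_mem j by blast
  have "(\<Sum>ys\<in>profiles m Y. P th ys * g (ys j)) =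
        (\<Sum>y\<in>Y j. \<Sum>ys\<in>{ys \<in> profiles m Y. ys j = y}. P th ys * g (ys j))"
    by (rule sum.group[OF fS fin[OF j] im, symmetric])
  also have "\<dots> = (\<Sum>y\<in>Y j. (\<Sum>ys\<in>{ys \<in> profiles m Y. ys j = y}. P th ys) * g y)"
  proof (intro sum.cong refl)
    fix y
    have "(\<Sum>ys\<in>{ys \<in> profiles m Y. ys j = y}. P th ys * g (ys j)) = (\<Sum>ys\<in>{ys \<in> profiles m Y. ys j = y}. P th ys * g y)"
      by (intro sum.cong refl) auto
    then show "(\<Sum>ys\<in>{ys \<in> profiles m Y. ys j = y}. P th ys * g (ys j)) = (\<Sum>ys\<in>{ys \<in> profiles m Y. ys j = y}. P th ys) * g y"
      by (simp add: sum_distrib_right)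
  qed
  also have "\<dots> = (\<Sum>y\<in>Y j. Pj j th y * g y)"
  proof -
    have "\<forall>y. (\<Sum>ys\<in>{ys \<in> profiles m Y. ys j = y}. P th ys) = Pj j th y"
      using P j unfolding couplings_def by blast
    then show ?thesis by simp
  qed
  finally show ?thesis .
qed

lemma coupling_exists:
  fixes Y :: "nat \<Rightarrow> 'y set"
  assumes exps: "\<forall>j<m. is_experiment (Y j) (Pj j)"
  shows "couplings m Y Pj \<noteq> {}"
proof -
  have fin: "\<And>j. j < m \<Longrightarrow> finite (Y j)" using exps by (auto simp: is_experiment_def)
  define S where "S = profiles m Y"
  have fS: "finite S" unfolding S_def using fin by (rule finite_profiles)
  define P0 where "P0 = (\<lambda>th ys. if ys \<in> S then (\<Prod>j<m. Pj j th (ys j)) else 0)"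
  have dist: "is_dist (Y j) (Pj j th)" if "j < m" for j th using exps that by (auto simp: is_experiment_def)
  have prodsum: "(\<Sum>ys\<in>S. \<Prod>j<m. g j (ys j)) = (\<Prod>j<m. \<Sum>z\<in>Y j. g j z)" for g :: "nat \<Rightarrow> 'y \<Rightarrow> real"
    unfolding S_def profiles_def by (rule prod_sum_PiE[symmetric]) (auto intro: fin)
  have "P0 \<in> couplings m Y Pj"
    unfolding couplings_def
  proof (rule CollectI, rule allI)
    fix th
    have d: "is_dist (profiles m Y) (P0 th)"
      unfolding is_dist_def
    proof (intro conjI allI impI)
      fix ys show "0 \<le> P0 th ys" unfolding P0_def
        using dist by (auto intro!: prod_nonneg simp: is_dist_def)
    next
      fix ys assume "ys \<notin> profiles m Y" then show "P0 th ys = 0" by (simp add: P0_def S_def)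
    next
      have "(\<Sum>ys\<in>profiles m Y. P0 th ys) = (\<Sum>ys\<in>S. \<Prod>j<m. Pj j th (ys j))"
        by (simp add: P0_def S_def)
      also have "\<dots> = (\<Prod>j<m. \<Sum>z\<in>Y j. Pj j th z)" by (rule prodsum)
      also have "\<dots> = 1" using dist by (simp add: is_dist_def)
      finally show "(\<Sum>ys\<in>profiles m Y. P0 th ys) = 1" .
    qed
    have mg: "\<forall>j<m. \<forall>y. (\<Sum>ys\<in>{ys \<in> profiles m Y. ys j = y}. P0 th ys) = Pj j th y"
    proof (intro allI impI)
      fix j0 y assume j0: "j0 < m"
      define g where "g = (\<lambda>j z. if j = j0 then (if z = y then Pj j th z else 0) else Pj j th z)"
      have "(\<Sum>ys\<in>{ys \<in> profiles m Y. ys j0 = y}. P0 th ys) = (\<Sum>ys\<in>S. if ys j0 = y then (\<Prod>j<m. Pj j th (ys j)) else 0)"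
        using fS by (simp add: S_def P0_def sum.inter_filter)
      also have "\<dots> = (\<Sum>ys\<in>S. \<Prod>j<m. g j (ys j))"
      proof (intro sum.cong refl)
        fix ys assume "ys \<in> S"
        show "(if ys j0 = y then (\<Prod>j<m. Pj j th (ys j)) else 0) = (\<Prod>j<m. g j (ys j))"
        proof (cases "ys j0 = y")
          case True
          have "(\<Prod>j<m. Pj j th (ys j)) = (\<Prod>j<m. g j (ys j))"
            using True by (intro prod.cong refl) (auto simp: g_def)
          then show ?thesis using True by simp
        next
          case False
          have "g j0 (ys j0) = 0" using False by (simp add: g_def)
          then have "(\<Prod>j<m. g j (ys j)) = 0" using j0 by (intro prod_zero) auto
          then show ?thesis using False by simp
        qed
      qed
      also have "\<dots> = (\<Prod>j<m. \<Sum>z\<in>Y j. g j z)" by (rule prodsum)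
      also have "\<dots> = (\<Prod>j<m. if j = j0 then Pj j0 th y else 1)"
      proof (intro prod.cong refl)
        fix j assume j: "j \<in> {..<m}"
        show "(\<Sum>z\<in>Y j. g j z) = (if j = j0 then Pj j0 th y else 1)"
        proof (cases "j = j0")
          case True
          have "(\<Sum>z\<in>Y j. g j z) = (\<Sum>z\<in>Y j0. if z = y then Pj j0 th z else 0)"
            using True by (simp add: g_def)
          also have "\<dots> = Pj j0 th y" using fin[OF j0] dist[OF j0, of th]
            by (simp add: sum.delta' is_dist_def)
          finally show ?thesis using True by simp
        next
          case False
          then show ?thesis using dist[of j th] j by (simp add: g_def is_dist_def)
        qed
      qed
      also have "\<dots> = Pj j0 th y" using j0 by (simp add: prod.delta)
      finally show "(\<Sum>ys\<in>{ys \<in> profiles m Y. ys j0 = y}. P0 th ys) = Pj j0 th y" .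
    qed
    show "is_dist (profiles m Y) (P0 th) \<and> (\<forall>j<m. \<forall>y. (\<Sum>ys\<in>{ys \<in> profiles m Y. ys j = y}. P0 th ys) = Pj j th y)"
      using d mg by blast
  qed
  then show ?thesis by blast
qed

definition Dset :: "'a set \<Rightarrow> ('th::finite \<Rightarrow> 'a \<Rightarrow> real) \<Rightarrow> (real^'th) set" where
  "Dset A u = {v. \<exists>\<alpha>. is_dist A \<alpha> \<and> (\<forall>th. v $ th \<le> exp_util A u th \<alpha>)}"

lemma convex_Dset: "convex (Dset A u)"
  unfolding convex_def
proof (intro ballI allI impI)
  fix x y :: "real^'a" and s t :: real
  assume x: "x \<in> Dset A u" and y: "y \<in> Dset A u" and st: "0 \<le> s" "0 \<le> t" "s + t = 1"
  obtain \<alpha> where \<alpha>: "is_dist A \<alpha>" "\<forall>th. x $ th \<le> exp_util A u th \<alpha>" using x by (auto simp: Dset_def)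
  obtain \<beta> where \<beta>: "is_dist A \<beta>" "\<forall>th. y $ th \<le> exp_util A u th \<beta>" using y by (auto simp: Dset_def)
  define \<gamma> where "\<gamma> = (\<lambda>a. s * \<alpha> a + t * \<beta> a)"
  have "is_dist A \<gamma>"
    using \<alpha>(1) \<beta>(1) st unfolding is_dist_def \<gamma>_def
    by (auto simp: sum.distrib sum_distrib_left[symmetric])
  moreover have "(s *\<^sub>R x + t *\<^sub>R y) $ th \<le> exp_util A u th \<gamma>" for th
  proof -
    have "(s *\<^sub>R x + t *\<^sub>R y) $ th = s * x $ th + t * y $ th" by simp
    also have "\<dots> \<le> s * exp_util A u th \<alpha> + t * exp_util A u th \<beta>"
      using \<alpha>(2) \<beta>(2) st by (intro add_mono mult_left_mono) auto
    also have "\<dots> = exp_util A u th \<gamma>"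
      unfolding exp_util_def \<gamma>_def by (simp add: sum.distrib sum_distrib_left algebra_simps)
    finally show ?thesis .
  qed
  ultimately show "s *\<^sub>R x + t *\<^sub>R y \<in> Dset A u" unfolding Dset_def by blast
qed

lemma Dset_Hset:
  assumes "finite A"
  shows "Dset A u \<subseteq> Hset A u"
proof
  fix v assume "v \<in> Dset A u"
  then obtain \<alpha> where \<alpha>: "is_dist A \<alpha>" "\<forall>th. v $ th \<le> exp_util A u th \<alpha>" by (auto simp: Dset_def)
  define w where "w = (\<Sum>a\<in>A. \<alpha> a *\<^sub>R (\<chi> th. u th a))"
  have w: "w $ th = exp_util A u th \<alpha>" for th
    by (simp add: w_def exp_util_def sum_component)
  have "w \<in> convex hull ((\<lambda>a. \<chi> th. u th a) ` A)"
    unfolding w_def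
    using \<alpha>(1) assms by (intro convex_sum) (auto simp: is_dist_def convex_convex_hull hull_subset[THEN subsetD])
  moreover have "v = w - (w - v)" by simp
  moreover have "\<forall>th. 0 \<le> (w - v) $ th" using \<alpha>(2) w by simp
  ultimately show "v \<in> Hset A u" unfolding Hset_def by blast
qed



definition Fval :: "'a set \<Rightarrow> ('th::finite \<Rightarrow> 'a \<Rightarrow> real) \<Rightarrow> nat \<Rightarrow> (nat \<Rightarrow> 'y set)
   \<Rightarrow> ('th \<Rightarrow> (nat \<Rightarrow> 'y) \<Rightarrow> real) \<Rightarrow> ((nat \<Rightarrow> 'y) \<Rightarrow> 'a \<Rightarrow> real) \<Rightarrow> real" where
  "Fval A u m Y P \<sigma> = (\<Sum>th\<in>UNIV. \<Sum>ys\<in>profiles m Y. P th ys * exp_util A u th (\<sigma> ys))"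

definition Ub :: "'a set \<Rightarrow> ('th::finite \<Rightarrow> 'a \<Rightarrow> real) \<Rightarrow> real" where
  "Ub A u = (\<Sum>th\<in>UNIV. \<Sum>a\<in>A. \<bar>u th a\<bar>)"

lemma Vjoint_alt: "Vjoint A u m Y Pj = (SUP \<sigma>\<in>strategies (profiles m Y) A. INF P\<in>couplings m Y Pj. Fval A u m Y P \<sigma>)"
  unfolding Vjoint_def Fval_def ..

lemma strategies_nonempty: "finite A \<Longrightarrow> A \<noteq> {} \<Longrightarrow> strategies S A \<noteq> {}"
proof -
  assume "finite A" "A \<noteq> {}"
  then obtain a0 where a0: "a0 \<in> A" by blast
  have "(\<lambda>s b. if b = a0 then 1 else 0) \<in> strategies S A"
    unfolding strategies_def is_dist_def using a0 \<open>finite A\<close> by (auto simp: sum.delta)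
  then show ?thesis by blast
qed

lemma coupling_dist: "P \<in> couplings m Y Pj \<Longrightarrow> is_dist (profiles m Y) (P th)"
  unfolding couplings_def by blast

lemma Fval_bound:
  assumes "finite A" "finite (profiles m Y)" "\<sigma> \<in> strategies (profiles m Y) A" "P \<in> couplings m Y Pj"
  shows "\<bar>Fval A u m Y P \<sigma>\<bar> \<le> Ub A u"
proof -
  have "\<bar>Fval A u m Y P \<sigma>\<bar> \<le> (\<Sum>th\<in>UNIV. \<bar>\<Sum>ys\<in>profiles m Y. P th ys * exp_util A u th (\<sigma> ys)\<bar>)"
    unfolding Fval_def by (rule sum_abs)
  also have "\<dots> \<le> (\<Sum>th\<in>UNIV. \<Sum>a\<in>A. \<bar>u th a\<bar>)"
  proof (rule sum_mono)
    fix th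
    show "\<bar>\<Sum>ys\<in>profiles m Y. P th ys * exp_util A u th (\<sigma> ys)\<bar> \<le> (\<Sum>a\<in>A. \<bar>u th a\<bar>)"
    proof (rule avg_bound[OF assms(2) coupling_dist[OF assms(4)]])
      fix ys assume "ys \<in> profiles m Y"
      then have "is_dist A (\<sigma> ys)" using assms(3) by (auto simp: strategies_def)
      then show "\<bar>exp_util A u th (\<sigma> ys)\<bar> \<le> (\<Sum>a\<in>A. \<bar>u th a\<bar>)"
        by (rule exp_util_bound[OF assms(1)])
    qed
  qed
  finally show ?thesis unfolding Ub_def .
qed

lemma Vjoint_le:
  assumes "finite A" "A \<noteq> {}" "finite (profiles m Y)"
    and "P \<in> couplings m Y Pj" and le: "\<And>\<sigma>. \<sigma> \<in> strategies (profiles m Y) A \<Longrightarrow> Fval A u m Y P \<sigma> \<le> c"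
  shows "Vjoint A u m Y Pj \<le> c"
  unfolding Vjoint_alt
proof (rule cSUP_least)
  show "strategies (profiles m Y) A \<noteq> {}" using assms(1,2) by (rule strategies_nonempty)
next
  fix \<sigma> assume s: "\<sigma> \<in> strategies (profiles m Y) A"
  have bdd: "bdd_below ((\<lambda>P. Fval A u m Y P \<sigma>) ` couplings m Y Pj)"
  proof (rule bdd_belowI2)
    fix P assume "P \<in> couplings m Y Pj"
    then have "\<bar>Fval A u m Y P \<sigma>\<bar> \<le> Ub A u" by (rule Fval_bound[OF assms(1,3) s])
    then show "- Ub A u \<le> Fval A u m Y P \<sigma>" by (simp add: abs_le_iff)
  qed
  have "(INF P\<in>couplings m Y Pj. Fval A u m Y P \<sigma>) \<le> Fval A u m Y P \<sigma>"
    by (rule cINF_lower[OF bdd assms(4)])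
  also have "\<dots> \<le> c" using le[OF s] .
  finally show "(INF P\<in>couplings m Y Pj. Fval A u m Y P \<sigma>) \<le> c" .
qed

lemma Vjoint_ge:
  assumes "finite A" "finite (profiles m Y)" "couplings m Y Pj \<noteq> {}"
    and s: "\<sigma> \<in> strategies (profiles m Y) A" and ge: "\<And>P. P \<in> couplings m Y Pj \<Longrightarrow> c \<le> Fval A u m Y P \<sigma>"
  shows "c \<le> Vjoint A u m Y Pj"
  unfolding Vjoint_alt
proof -
  have bdd: "bdd_above ((\<lambda>\<sigma>. INF P\<in>couplings m Y Pj. Fval A u m Y P \<sigma>) ` strategies (profiles m Y) A)"
  proof (rule bdd_aboveI2)
    fix \<sigma>' assume s': "\<sigma>' \<in> strategies (profiles m Y) A"
    obtain P where P: "P \<in> couplings m Y Pj" using assms(3) by blast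
    have bddb: "bdd_below ((\<lambda>P. Fval A u m Y P \<sigma>') ` couplings m Y Pj)"
    proof (rule bdd_belowI2)
      fix P assume "P \<in> couplings m Y Pj"
      then have "\<bar>Fval A u m Y P \<sigma>'\<bar> \<le> Ub A u" by (rule Fval_bound[OF assms(1,2) s'])
    then show "- Ub A u \<le> Fval A u m Y P \<sigma>'" by (simp add: abs_le_iff)
    qed
    have "(INF P\<in>couplings m Y Pj. Fval A u m Y P \<sigma>') \<le> Fval A u m Y P \<sigma>'"
      by (rule cINF_lower[OF bddb P])
    also have "\<dots> \<le> Ub A u" using Fval_bound[OF assms(1,2) s' P] by (simp add: abs_le_iff)
    finally show "(INF P\<in>couplings m Y Pj. Fval A u m Y P \<sigma>') \<le> Ub A u" .
  qed
  have "c \<le> (INF P\<in>couplings m Y Pj. Fval A u m Y P \<sigma>)"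
    using assms(3) ge by (rule cINF_greatest)
  also have "\<dots> \<le> (SUP \<sigma>\<in>strategies (profiles m Y) A. INF P\<in>couplings m Y Pj. Fval A u m Y P \<sigma>)"
    by (rule cSUP_upper[OF s bdd])
  finally show "c \<le> (SUP \<sigma>\<in>strategies (profiles m Y) A. INF P\<in>couplings m Y Pj. Fval A u m Y P \<sigma>)" .
qed



lemma Inl_in_Plus_iff[simp]: "Inl a \<in> A <+> B \<longleftrightarrow> a \<in> A" by auto
lemma Inr_in_Plus_iff[simp]: "Inr b \<in> A <+> B \<longleftrightarrow> b \<in> B" by auto

lemma main_exists:
  fixes A :: "'a set" and u :: "'th::finite \<Rightarrow> 'a \<Rightarrow> real" and Y :: "nat \<Rightarrow> 'y set"
    and Pj :: "nat \<Rightarrow> 'th \<Rightarrow> 'y \<Rightarrow> real"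
  assumes dp: "decision_problem A" and m: "m \<ge> 1" and exps: "\<forall>j<m. is_experiment (Y j) (Pj j)"
  shows "\<exists>w \<sigma>. \<sigma> \<in> strategies (profiles m Y) A \<and>
     (\<forall>th. \<forall>ys\<in>profiles m Y. (\<Sum>j<m. w j th (ys j)) \<le> exp_util A u th (\<sigma> ys)) \<and>
     Vjoint A u m Y Pj \<le> (\<Sum>j<m. \<Sum>th\<in>UNIV. \<Sum>y\<in>Y j. Pj j th y * w j th y)"
proof (rule ccontr)
  assume H: "\<not> ?thesis"
  define S where "S = profiles m Y"
  define t where "t = Vjoint A u m Y Pj"
  have finA: "finite A" and Ane: "A \<noteq> {}" using dp by (auto simp: decision_problem_def)
  have finY: "\<And>j. j < m \<Longrightarrow> finite (Y j)" using exps by (auto simp: is_experiment_def)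
  have dist: "\<And>j th. j < m \<Longrightarrow> is_dist (Y j) (Pj j th)" using exps by (auto simp: is_experiment_def)
  have finS: "finite S" unfolding S_def using finY by (rule finite_profiles)
  have memS: "\<And>ys j. ys \<in> S \<Longrightarrow> j < m \<Longrightarrow> ys j \<in> Y j" unfolding S_def by (rule profiles_mem)
  define IV :: "((nat \<times> 'th \<times> 'y) + ((nat \<Rightarrow> 'y) \<times> 'a)) set" where
    "IV = Sigma {..<m} (\<lambda>j. UNIV \<times> Y j) <+> (S \<times> A)"
  define KK :: "(('th \<times> (nat \<Rightarrow> 'y)) + (((nat \<Rightarrow> 'y) \<times> 'a) + (((nat \<Rightarrow> 'y) \<times> bool) + unit))) set" where
    "KK = (UNIV \<times> S) <+> ((S \<times> A) <+> ((S \<times> UNIV) <+> UNIV))"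
  define g :: "(('th \<times> (nat \<Rightarrow> 'y)) + (((nat \<Rightarrow> 'y) \<times> 'a) + (((nat \<Rightarrow> 'y) \<times> bool) + unit)))
       \<Rightarrow> (((nat \<times> 'th \<times> 'y) + ((nat \<Rightarrow> 'y) \<times> 'a)) \<Rightarrow> real) \<Rightarrow> real" where
    "g = (\<lambda>k x. case k of
       Inl (th, ys) \<Rightarrow> (\<Sum>j<m. x (Inl (j, th, ys j))) - (\<Sum>a\<in>A. x (Inr (ys, a)) * u th a)
     | Inr (Inl (ys, a)) \<Rightarrow> - x (Inr (ys, a))
     | Inr (Inr (Inl (ys, s))) \<Rightarrow> (if s then 1 else -1) * (\<Sum>a\<in>A. x (Inr (ys, a)))
     | Inr (Inr (Inr _)) \<Rightarrow> - (\<Sum>j<m. \<Sum>th\<in>UNIV. \<Sum>y\<in>Y j. Pj j th y * x (Inl (j, th, y))))"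
  define bb :: "(('th \<times> (nat \<Rightarrow> 'y)) + (((nat \<Rightarrow> 'y) \<times> 'a) + (((nat \<Rightarrow> 'y) \<times> bool) + unit))) \<Rightarrow> real" where
    "bb = (\<lambda>k. case k of
       Inl _ \<Rightarrow> 0
     | Inr (Inl _) \<Rightarrow> 0
     | Inr (Inr (Inl (ys, s))) \<Rightarrow> (if s then 1 else -1)
     | Inr (Inr (Inr _)) \<Rightarrow> - t)"
  have g1: "g (Inl (th, ys)) = (\<lambda>x. (\<Sum>j<m. x (Inl (j, th, ys j))) - (\<Sum>a\<in>A. x (Inr (ys, a)) * u th a))" for th ys
    by (simp add: g_def)
  have g2: "g (Inr (Inl (ys, a))) = (\<lambda>x. - x (Inr (ys, a)))" for ys a
    by (simp add: g_def)
  have g3: "g (Inr (Inr (Inl (ys, s)))) = (\<lambda>x. (if s then 1 else -1) * (\<Sum>a\<in>A. x (Inr (ys, a))))" for ys s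
    by (simp add: g_def)
  have g4: "g (Inr (Inr (Inr z))) = (\<lambda>x. - (\<Sum>j<m. \<Sum>th\<in>UNIV. \<Sum>y\<in>Y j. Pj j th y * x (Inl (j, th, y))))" for z
    by (simp add: g_def)
  have finIV: "finite IV" unfolding IV_def using finY finS finA by (auto intro!: finite_SigmaI)
  have finKK: "finite KK" unfolding KK_def using finS finA by auto
  have rep: "\<forall>k\<in>KK. rep IV (g k)"
  proof
    fix k assume k: "k \<in> KK"
    consider (c1) th ys where "k = Inl (th, ys)" "ys \<in> S"
      | (c2) ys a where "k = Inr (Inl (ys, a))" "ys \<in> S" "a \<in> A"
      | (c3) ys s where "k = Inr (Inr (Inl (ys, s)))" "ys \<in> S"
      | (c4) z where "k = Inr (Inr (Inr z))"
      using k unfolding KK_def by auto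
    then show "rep IV (g k)"
    proof cases
      case c1
      show ?thesis unfolding c1 g1
        by (intro rep_diff rep_sum rep_scale_r rep_var finIV finA) (auto simp: IV_def memS c1)
    next
      case c2
      show ?thesis unfolding c2 g2
        by (intro rep_neg rep_var finIV) (auto simp: IV_def c2)
    next
      case c3
      show ?thesis unfolding c3 g3
        by (intro rep_scale rep_sum rep_var finIV finA) (auto simp: IV_def c3)
    next
      case c4
      show ?thesis unfolding c4 g4
        by (intro rep_neg rep_sum rep_scale rep_var finIV finY finite_UNIV) (auto simp: IV_def)
    qed
  qed
  have nofeas: "\<not>(\<exists>x. \<forall>k\<in>KK. g k x \<le> bb k)"
  proof
    assume "\<exists>x. \<forall>k\<in>KK. g k x \<le> bb k"
    then obtain x where x: "\<forall>k\<in>KK. g k x \<le> bb k" by blast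
    define w where "w = (\<lambda>j th y. x (Inl (j, th, y)))"
    define \<sigma> where "\<sigma> = (\<lambda>ys a. if a \<in> A then x (Inr (ys, a)) else 0)"
    have c1: "(\<Sum>j<m. x (Inl (j, th, ys j))) - (\<Sum>a\<in>A. x (Inr (ys, a)) * u th a) \<le> 0" if "ys \<in> S" for th ys
      using x[rule_format, of "Inl (th,ys)"] that by (simp add: KK_def g1 bb_def)
    have c2: "0 \<le> x (Inr (ys,a))" if "ys \<in> S" "a \<in> A" for ys a
      using x[rule_format, of "Inr (Inl (ys,a))"] that by (simp add: KK_def g2 bb_def)
    have c3: "(\<Sum>a\<in>A. x (Inr (ys,a))) \<le> 1" if "ys \<in> S" for ys
      using x[rule_format, of "Inr (Inr (Inl (ys,True)))"] that by (simp add: KK_def g3 bb_def)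
    have c3': "1 \<le> (\<Sum>a\<in>A. x (Inr (ys,a)))" if "ys \<in> S" for ys
      using x[rule_format, of "Inr (Inr (Inl (ys,False)))"] that by (simp add: KK_def g3 bb_def)
    have c4: "t \<le> (\<Sum>j<m. \<Sum>th\<in>UNIV. \<Sum>y\<in>Y j. Pj j th y * x (Inl (j, th, y)))"
      using x[rule_format, of "Inr (Inr (Inr ()))"] by (simp add: KK_def g4 bb_def)
    have eu: "exp_util A u th (\<sigma> ys) = (\<Sum>a\<in>A. x (Inr (ys, a)) * u th a)" for th ys
      unfolding exp_util_def \<sigma>_def by (intro sum.cong) auto
    have st: "\<sigma> \<in> strategies S A"
      unfolding strategies_def is_dist_def
    proof (intro CollectI ballI conjI allI impI)
      fix s a assume "s \<in> S"
      then show "0 \<le> \<sigma> s a" using c2 by (auto simp: \<sigma>_def)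
    next
      fix s a assume "a \<notin> A" then show "\<sigma> s a = 0" by (simp add: \<sigma>_def)
    next
      fix s assume "s \<in> S"
      have "sum (\<sigma> s) A = (\<Sum>a\<in>A. x (Inr (s,a)))" unfolding \<sigma>_def by (intro sum.cong) auto
      then show "sum (\<sigma> s) A = 1" using c3 c3' \<open>s \<in> S\<close> by force
    qed
    have "\<exists>w \<sigma>. \<sigma> \<in> strategies (profiles m Y) A \<and>
     (\<forall>th. \<forall>ys\<in>profiles m Y. (\<Sum>j<m. w j th (ys j)) \<le> exp_util A u th (\<sigma> ys)) \<and>
     Vjoint A u m Y Pj \<le> (\<Sum>j<m. \<Sum>th\<in>UNIV. \<Sum>y\<in>Y j. Pj j th y * w j th y)"
    proof (intro exI[of _ w] exI[of _ \<sigma>] conjI allI ballI)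
      show "\<sigma> \<in> strategies (profiles m Y) A" using st by (simp add: S_def)
    next
      fix th ys assume "ys \<in> profiles m Y"
      then show "(\<Sum>j<m. w j th (ys j)) \<le> exp_util A u th (\<sigma> ys)"
        using c1[of ys th] by (simp add: S_def w_def eu)
    next
      show "Vjoint A u m Y Pj \<le> (\<Sum>j<m. \<Sum>th\<in>UNIV. \<Sum>y\<in>Y j. Pj j th y * w j th y)"
        using c4 by (simp add: t_def w_def)
    qed
    then show False using H by blast
  qed
  obtain y where y0: "\<forall>k\<in>KK. 0 \<le> y k" and yg: "\<forall>x. (\<Sum>k\<in>KK. y k * g k x) = 0"
      and yb: "(\<Sum>k\<in>KK. y k * bb k) < 0"
    using farkas_fun[OF finIV finKK rep nofeas] by blast
  define \<pi> where "\<pi> = (\<lambda>th ys. y (Inl (th, ys)))"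
  define \<mu> where "\<mu> = (\<lambda>ys a. y (Inr (Inl (ys, a))))"
  define \<nu> where "\<nu> = (\<lambda>ys. y (Inr (Inr (Inl (ys, True)))) - y (Inr (Inr (Inl (ys, False)))))"
  define lam where "lam = y (Inr (Inr (Inr ())))"
  have \<pi>0: "0 \<le> \<pi> th ys" if "ys \<in> S" for th ys using y0 that by (simp add: \<pi>_def KK_def)
  have \<mu>0: "0 \<le> \<mu> ys a" if "ys \<in> S" "a \<in> A" for ys a using y0 that by (simp add: \<mu>_def KK_def)
  have lam0: "0 \<le> lam" using y0 by (simp add: lam_def KK_def)
  have split: "(\<Sum>k\<in>KK. y k * f k) = (\<Sum>p\<in>UNIV \<times> S. y (Inl p) * f (Inl p))
      + ((\<Sum>p\<in>S \<times> A. y (Inr (Inl p)) * f (Inr (Inl p)))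
      + ((\<Sum>p\<in>S \<times> UNIV. y (Inr (Inr (Inl p))) * f (Inr (Inr (Inl p))))
      + y (Inr (Inr (Inr ()))) * f (Inr (Inr (Inr ())))))" for f
    unfolding KK_def using finS finA by (simp add: sum.Plus UNIV_unit o_def)
  have cp: "(\<Sum>p\<in>X \<times> Z. h p) = (\<Sum>a\<in>X. \<Sum>b\<in>Z. h (a, b))" for X Z and h :: "_ \<Rightarrow> real"
    by (simp add: sum.cartesian_product)
  \<comment> \<open>coefficient of the w-variables\<close>
  have E1: "(\<Sum>ys\<in>{ys \<in> S. ys j0 = y0}. \<pi> th0 ys) = lam * Pj j0 th0 y0"
    if j0: "j0 < m" and y0: "y0 \<in> Y j0" for j0 th0 y0
  proof -
    define e :: "((nat \<times> 'th \<times> 'y) + ((nat \<Rightarrow> 'y) \<times> 'a)) \<Rightarrow> real"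
      where "e = (\<lambda>i. if i = Inl (j0, th0, y0) then 1 else 0)"
    have e1: "g (Inl (th, ys)) e = (if th = th0 \<and> ys j0 = y0 then 1 else 0)" for th ys
    proof -
      have "(\<Sum>j<m. e (Inl (j, th, ys j))) = (\<Sum>j<m. if j = j0 then (if th = th0 \<and> ys j0 = y0 then 1 else 0) else 0)"
        by (intro sum.cong) (auto simp: e_def)
      also have "\<dots> = (if th = th0 \<and> ys j0 = y0 then 1 else 0)" using j0 by (simp add: sum.delta)
      finally have a: "(\<Sum>j<m. e (Inl (j, th, ys j))) = (if th = th0 \<and> ys j0 = y0 then 1 else 0)" .
      have b: "(\<Sum>a\<in>A. e (Inr (ys, a)) * u th a) = 0" by (simp add: e_def)
      show ?thesis unfolding g1 using a b by simp
    qed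
    have e2: "g (Inr (Inl p)) e = 0" for p by (cases p) (simp add: g2 e_def)
    have e3: "g (Inr (Inr (Inl p))) e = 0" for p by (cases p) (simp add: g3 e_def)
    have inner: "(\<Sum>y\<in>Y j. Pj j th y * e (Inl (j, th, y))) = (if j = j0 \<and> th = th0 then Pj j0 th0 y0 else 0)" for j th
    proof (cases "j = j0 \<and> th = th0")
      case True
      then have "(\<Sum>y\<in>Y j. Pj j th y * e (Inl (j, th, y))) = (\<Sum>y\<in>Y j0. if y = y0 then Pj j0 th0 y else 0)"
        by (auto simp: e_def intro!: sum.cong)
      also have "\<dots> = Pj j0 th0 y0" using finY[OF j0] y0 by (simp add: sum.delta)
      finally show ?thesis using True by simp
    next
      case False
      have "(\<Sum>y\<in>Y j. Pj j th y * e (Inl (j, th, y))) = (\<Sum>y\<in>Y j. 0)" using False by (intro sum.cong) (auto simp: e_def)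
      then have l: "(\<Sum>y\<in>Y j. Pj j th y * e (Inl (j, th, y))) = 0" by simp
      have r: "(if j = j0 \<and> th = th0 then Pj j0 th0 y0 else 0) = 0" using False by (rule if_not_P)
      show ?thesis using l r by linarith
    qed
    have mid: "(\<Sum>th\<in>UNIV. if j = j0 \<and> th = th0 then c else 0) = (if j = j0 then c else 0)" for j and c :: real
      by (cases "j = j0") (simp_all add: sum.delta)
    have e4: "g (Inr (Inr (Inr z))) e = - Pj j0 th0 y0" for z
      unfolding g4 using j0 by (simp add: inner mid sum.delta)
    have f1: "(\<Sum>p\<in>UNIV \<times> S. y (Inl p) * g (Inl p) e) = (\<Sum>ys\<in>{ys \<in> S. ys j0 = y0}. \<pi> th0 ys)"
    proof -
      have "(\<Sum>p\<in>UNIV \<times> S. y (Inl p) * g (Inl p) e) = (\<Sum>th\<in>UNIV. \<Sum>ys\<in>S. if th = th0 then (if ys j0 = y0 then \<pi> th0 ys else 0) else 0)"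
        unfolding cp by (intro sum.cong refl) (auto simp: e1 \<pi>_def)
      also have "\<dots> = (\<Sum>ys\<in>S. if ys j0 = y0 then \<pi> th0 ys else 0)"
        by (subst sum.swap) (simp add: sum.delta)
      also have "\<dots> = (\<Sum>ys\<in>{ys \<in> S. ys j0 = y0}. \<pi> th0 ys)"
        using finS by (simp add: sum.inter_filter)
      finally show ?thesis .
    qed
    have "0 = (\<Sum>k\<in>KK. y k * g k e)" using yg by simp
    also have "\<dots> = (\<Sum>ys\<in>{ys \<in> S. ys j0 = y0}. \<pi> th0 ys) - lam * Pj j0 th0 y0"
      unfolding split f1 using e2 e3 e4 by (simp add: lam_def)
    finally show ?thesis by simp
  qed
  \<comment> \<open>coefficient of the sigma-variables\<close>
  have E2: "(\<Sum>th\<in>UNIV. \<pi> th ys0 * u th a0) \<le> \<nu> ys0" if ys0: "ys0 \<in> S" and a0: "a0 \<in> A" for ys0 a0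
  proof -
    define e :: "((nat \<times> 'th \<times> 'y) + ((nat \<Rightarrow> 'y) \<times> 'a)) \<Rightarrow> real"
      where "e = (\<lambda>i. if i = Inr (ys0, a0) then 1 else 0)"
    have e1: "g (Inl (th, ys)) e = - (if ys = ys0 then u th a0 else 0)" for th ys
    proof -
      have a: "(\<Sum>j<m. e (Inl (j, th, ys j))) = 0" by (simp add: e_def)
      have "(\<Sum>a\<in>A. e (Inr (ys, a)) * u th a) = (\<Sum>a\<in>A. if a = a0 then (if ys = ys0 then u th a else 0) else 0)"
        by (intro sum.cong) (auto simp: e_def)
      also have "\<dots> = (if ys = ys0 then u th a0 else 0)" using finA a0 by (simp add: sum.delta)
      finally show ?thesis unfolding g1 using a by simp
    qed
    have e2: "g (Inr (Inl (ys, a))) e = - (if ys = ys0 \<and> a = a0 then 1 else 0)" for ys a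
      by (simp add: g2 e_def)
    have e3: "g (Inr (Inr (Inl (ys, s)))) e = (if s then 1 else -1) * (if ys = ys0 then 1 else 0)" for ys s
    proof -
      have "(\<Sum>a\<in>A. e (Inr (ys, a))) = (\<Sum>a\<in>A. if a = a0 then (if ys = ys0 then 1 else 0) else 0)"
        by (intro sum.cong) (auto simp: e_def)
      also have "\<dots> = (if ys = ys0 then 1 else 0)" using finA a0 by (simp add: sum.delta)
      finally show ?thesis unfolding g3 by simp
    qed
    have e4: "g (Inr (Inr (Inr z))) e = 0" for z unfolding g4 by (simp add: e_def)
    have f1: "(\<Sum>p\<in>UNIV \<times> S. y (Inl p) * g (Inl p) e) = - (\<Sum>th\<in>UNIV. \<pi> th ys0 * u th a0)"
    proof -
      have "(\<Sum>p\<in>UNIV \<times> S. y (Inl p) * g (Inl p) e) = (\<Sum>th\<in>UNIV. \<Sum>ys\<in>S. if ys = ys0 then - (\<pi> th ys0 * u th a0) else 0)"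
        unfolding cp by (intro sum.cong refl) (auto simp: e1 \<pi>_def)
      also have "\<dots> = - (\<Sum>th\<in>UNIV. \<pi> th ys0 * u th a0)"
        using finS ys0 by (simp add: sum.delta sum_negf)
      finally show ?thesis .
    qed
    have f2: "(\<Sum>p\<in>S \<times> A. y (Inr (Inl p)) * g (Inr (Inl p)) e) = - \<mu> ys0 a0"
    proof -
      have "(\<Sum>p\<in>S \<times> A. y (Inr (Inl p)) * g (Inr (Inl p)) e) = (\<Sum>ys\<in>S. if ys = ys0 then (\<Sum>a\<in>A. if a = a0 then - \<mu> ys0 a0 else 0) else 0)"
        unfolding cp by (intro sum.cong refl) (auto simp: e2 \<mu>_def intro!: sum.cong)
      also have "\<dots> = - \<mu> ys0 a0" using finS ys0 finA a0 by (simp add: sum.delta)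
      finally show ?thesis .
    qed
    have f3: "(\<Sum>p\<in>S \<times> UNIV. y (Inr (Inr (Inl p))) * g (Inr (Inr (Inl p))) e) = \<nu> ys0"
    proof -
      have "(\<Sum>p\<in>S \<times> UNIV. y (Inr (Inr (Inl p))) * g (Inr (Inr (Inl p))) e) = (\<Sum>ys\<in>S. if ys = ys0 then \<nu> ys0 else 0)"
        unfolding cp by (intro sum.cong refl) (auto simp: e3 \<nu>_def UNIV_bool)
      also have "\<dots> = \<nu> ys0" using finS ys0 by (simp add: sum.delta)
      finally show ?thesis .
    qed
    have "0 = (\<Sum>k\<in>KK. y k * g k e)" using yg by simp
    also have "\<dots> = - (\<Sum>th\<in>UNIV. \<pi> th ys0 * u th a0) - \<mu> ys0 a0 + \<nu> ys0"
      unfolding split f1 f2 f3 using e4 by simp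
    finally show ?thesis using \<mu>0[OF ys0 a0] by simp
  qed
  have Eb: "(\<Sum>ys\<in>S. \<nu> ys) < lam * t"
  proof -
    have f3: "(\<Sum>p\<in>S \<times> UNIV. y (Inr (Inr (Inl p))) * bb (Inr (Inr (Inl p)))) = (\<Sum>ys\<in>S. \<nu> ys)"
      unfolding cp by (intro sum.cong refl) (auto simp: bb_def \<nu>_def UNIV_bool)
    have "(\<Sum>k\<in>KK. y k * bb k) = (\<Sum>ys\<in>S. \<nu> ys) - lam * t"
      unfolding split f3 by (simp add: bb_def lam_def)
    then show ?thesis using yb by simp
  qed
  show False
  proof (cases "lam = 0")
    case True
    have m0: "0 < m" using m by simp
    have \<pi>z: "\<pi> th ys = 0" if ys: "ys \<in> S" for th ys
    proof -
      have y0: "ys 0 \<in> Y 0" using memS[OF ys m0] .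
      have s0: "(\<Sum>ys'\<in>{ys' \<in> S. ys' 0 = ys 0}. \<pi> th ys') = 0" using E1[OF m0 y0, of th] True by simp
      have fin: "finite {ys' \<in> S. ys' 0 = ys 0}" using finS by simp
      have nn: "\<And>ys'. ys' \<in> {ys' \<in> S. ys' 0 = ys 0} \<Longrightarrow> 0 \<le> \<pi> th ys'" using \<pi>0 by simp
      have "ys \<in> {ys' \<in> S. ys' 0 = ys 0}" using ys by simp
      moreover have "(\<Sum>ys'\<in>{ys' \<in> S. ys' 0 = ys 0}. \<pi> th ys') = 0 \<longleftrightarrow> (\<forall>x\<in>{ys' \<in> S. ys' 0 = ys 0}. \<pi> th x = 0)"
        by (rule sum_nonneg_eq_0_iff[OF fin nn])
      ultimately show ?thesis using s0 by blast
    qed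
    obtain a0 where a0: "a0 \<in> A" using Ane by blast
    have "0 \<le> \<nu> ys" if "ys \<in> S" for ys using E2[OF that a0] \<pi>z[OF that] by simp
    then have "0 \<le> (\<Sum>ys\<in>S. \<nu> ys)" by (rule sum_nonneg)
    with Eb True show False by simp
  next
    case False
    then have lp: "0 < lam" using lam0 by simp
    define P where "P = (\<lambda>th ys. if ys \<in> S then \<pi> th ys / lam else 0)"
    have marg: "(\<Sum>ys\<in>{ys \<in> profiles m Y. ys j = y}. P th ys) = Pj j th y" if j: "j < m" for j th y
    proof (cases "y \<in> Y j")
      case True
      have "(\<Sum>ys\<in>{ys \<in> profiles m Y. ys j = y}. P th ys) = (\<Sum>ys\<in>{ys \<in> S. ys j = y}. \<pi> th ys / lam)"
        by (intro sum.cong) (auto simp: P_def S_def)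
      also have "\<dots> = (\<Sum>ys\<in>{ys \<in> S. ys j = y}. \<pi> th ys) / lam"
        by (simp add: sum_divide_distrib)
      also have "\<dots> = Pj j th y" using E1[OF j True, of th] lp by simp
      finally show ?thesis .
    next
      case False
      have e: "{ys \<in> profiles m Y. ys j = y} = {}" using memS j False by (auto simp: S_def)
      have "Pj j th y = 0" using dist[OF j, of th] False by (simp add: is_dist_def)
      then show ?thesis unfolding e by simp
    qed
    have Pc: "P \<in> couplings m Y Pj"
      unfolding couplings_def
    proof (rule CollectI, rule allI)
      fix th
      have d: "is_dist (profiles m Y) (P th)"
        unfolding is_dist_def
      proof (intro conjI allI impI)
        fix ys show "0 \<le> P th ys" using \<pi>0 lp by (simp add: P_def)
      next
        fix ys assume "ys \<notin> profiles m Y" then show "P th ys = 0" by (simp add: P_def S_def)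
      next
        have m0: "0 < m" using m by simp
        have fS': "finite (profiles m Y)" using finS by (simp add: S_def)
        have im: "(\<lambda>ys. ys 0) ` profiles m Y \<subseteq> Y 0" using memS m0 by (auto simp: S_def)
        have "sum (P th) (profiles m Y) = (\<Sum>y\<in>Y 0. \<Sum>ys\<in>{ys \<in> profiles m Y. ys 0 = y}. P th ys)"
          by (rule sum.group[OF fS' finY[OF m0] im, symmetric])
        also have "\<dots> = (\<Sum>y\<in>Y 0. Pj 0 th y)" using marg[OF m0] by simp
        also have "\<dots> = 1" using dist[OF m0] by (simp add: is_dist_def)
        finally show "sum (P th) (profiles m Y) = 1" .
      qed
      show "is_dist (profiles m Y) (P th) \<and> (\<forall>j<m. \<forall>y. (\<Sum>ys\<in>{ys \<in> profiles m Y. ys j = y}. P th ys) = Pj j th y)"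
        using d marg by blast
    qed
    have bound: "Fval A u m Y P \<sigma> \<le> (\<Sum>ys\<in>S. \<nu> ys) / lam" if \<sigma>: "\<sigma> \<in> strategies (profiles m Y) A" for \<sigma>
    proof -
      have \<sigma>d: "is_dist A (\<sigma> ys)" if "ys \<in> S" for ys using \<sigma> that by (simp add: strategies_def S_def)
      have eq1: "Fval A u m Y P \<sigma> = (\<Sum>th\<in>UNIV. \<Sum>ys\<in>S. \<Sum>a\<in>A. \<sigma> ys a * (\<pi> th ys * u th a) / lam)"
        unfolding Fval_def exp_util_def S_def[symmetric]
      proof (rule sum.cong[OF refl], rule sum.cong[OF refl])
        fix th ys assume ys: "ys \<in> S"
        have "P th ys * (\<Sum>a\<in>A. \<sigma> ys a * u th a) = (\<Sum>a\<in>A. P th ys * (\<sigma> ys a * u th a))"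
          by (simp add: sum_distrib_left)
        also have "\<dots> = (\<Sum>a\<in>A. \<sigma> ys a * (\<pi> th ys * u th a) / lam)"
          using ys by (intro sum.cong refl) (simp add: P_def)
        finally show "P th ys * (\<Sum>a\<in>A. \<sigma> ys a * u th a) = (\<Sum>a\<in>A. \<sigma> ys a * (\<pi> th ys * u th a) / lam)" .
      qed
      also have "\<dots> = (\<Sum>ys\<in>S. \<Sum>a\<in>A. \<Sum>th\<in>UNIV. \<sigma> ys a * (\<pi> th ys * u th a) / lam)"
        by (subst sum.swap) (simp add: sum.swap[of _ A UNIV])
      also have "\<dots> = (\<Sum>ys\<in>S. \<Sum>a\<in>A. \<sigma> ys a * (\<Sum>th\<in>UNIV. \<pi> th ys * u th a) / lam)"
        by (simp add: sum_distrib_left sum_divide_distrib)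
      also have "\<dots> \<le> (\<Sum>ys\<in>S. \<Sum>a\<in>A. \<sigma> ys a * \<nu> ys / lam)"
      proof (intro sum_mono)
        fix ys a assume ys: "ys \<in> S" and a: "a \<in> A"
        have "0 \<le> \<sigma> ys a" using \<sigma>d[OF ys] by (simp add: is_dist_def)
        then have "\<sigma> ys a * (\<Sum>th\<in>UNIV. \<pi> th ys * u th a) \<le> \<sigma> ys a * \<nu> ys"
          using E2[OF ys a] by (rule mult_left_mono[rotated])
        then show "\<sigma> ys a * (\<Sum>th\<in>UNIV. \<pi> th ys * u th a) / lam \<le> \<sigma> ys a * \<nu> ys / lam"
          using lp by (simp add: divide_right_mono)
      qed
      also have "\<dots> = (\<Sum>ys\<in>S. \<nu> ys / lam)"
      proof (rule sum.cong[OF refl])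
        fix ys assume ys: "ys \<in> S"
        have "(\<Sum>a\<in>A. \<sigma> ys a * \<nu> ys / lam) = (\<Sum>a\<in>A. \<sigma> ys a) * \<nu> ys / lam"
          by (simp add: sum_distrib_right sum_divide_distrib)
        then show "(\<Sum>a\<in>A. \<sigma> ys a * \<nu> ys / lam) = \<nu> ys / lam" using \<sigma>d[OF ys] by (simp add: is_dist_def)
      qed
      also have "\<dots> = (\<Sum>ys\<in>S. \<nu> ys) / lam" by (simp add: sum_divide_distrib)
      finally show ?thesis .
    qed
    have "t \<le> (\<Sum>ys\<in>S. \<nu> ys) / lam"
      unfolding t_def using finA Ane finS[unfolded S_def] Pc bound by (rule Vjoint_le)
    moreover have "(\<Sum>ys\<in>S. \<nu> ys) / lam < t" using Eb lp by (simp add: divide_less_eq mult.commute)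
    ultimately show False by simp
  qed
qed



lemma mix:
  fixes Ac :: "nat \<Rightarrow> 'b set" and uc :: "nat \<Rightarrow> 'th::finite \<Rightarrow> 'b \<Rightarrow> real"
  assumes fin: "\<forall>l<k. finite (Ac l)" and q: "\<forall>l<k. is_dist (Ac l) (q l)"
    and pure: "\<forall>b\<in>PiE {..<k} Ac. (\<chi> th. \<Sum>l<k. uc l th (b l)) \<in> Dset A u"
  shows "(\<chi> th. \<Sum>l<k. exp_util (Ac l) (uc l) th (q l)) \<in> Dset A u"
proof -
  define T where "T = (\<lambda>n b th l. if l < n then exp_util (Ac l) (uc l) th (q l) else uc l th (b l))"
  have claim: "\<forall>b\<in>PiE {..<k} Ac. (\<chi> th. \<Sum>l<k. T n b th l) \<in> Dset A u" if "n \<le> k" for n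
    using that
  proof (induction n)
    case 0
    then show ?case using pure by (simp add: T_def)
  next
    case (Suc n)
    then have nk: "n < k" by simp
    show ?case
    proof
      fix b assume b: "b \<in> PiE {..<k} Ac"
      have bc: "b(n := c) \<in> PiE {..<k} Ac" if "c \<in> Ac n" for c
        using b that nk by (auto simp: PiE_iff extensional_def)
      have V: "(\<chi> th. \<Sum>l<k. T n (b(n := c)) th l) \<in> Dset A u" if "c \<in> Ac n" for c
        using Suc.IH nk bc[OF that] by simp
      have qn: "is_dist (Ac n) (q n)" using q nk by simp
      have eq: "(\<chi> th. \<Sum>l<k. T (Suc n) b th l) = (\<Sum>c\<in>Ac n. q n c *\<^sub>R (\<chi> th. \<Sum>l<k. T n (b(n := c)) th l))"
      proof (subst vec_eq_iff, intro allI)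
        fix th
        have "(\<Sum>c\<in>Ac n. q n c *\<^sub>R (\<chi> th. \<Sum>l<k. T n (b(n := c)) th l)) $ th
            = (\<Sum>c\<in>Ac n. q n c * (\<Sum>l<k. T n (b(n := c)) th l))"
          by (simp add: sum_component)
        also have "\<dots> = (\<Sum>l<k. \<Sum>c\<in>Ac n. q n c * T n (b(n := c)) th l)"
          by (simp add: sum_distrib_left) (rule sum.swap)
        also have "\<dots> = (\<Sum>l<k. T (Suc n) b th l)"
        proof (rule sum.cong[OF refl])
          fix l assume l: "l \<in> {..<k}"
          show "(\<Sum>c\<in>Ac n. q n c * T n (b(n := c)) th l) = T (Suc n) b th l"
          proof (cases "l = n")
            case True
            have "(\<Sum>c\<in>Ac n. q n c * T n (b(n := c)) th l) = (\<Sum>c\<in>Ac n. q n c * uc n th c)"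
              using True by (intro sum.cong refl) (simp add: T_def)
            also have "\<dots> = T (Suc n) b th l" using True by (simp add: T_def exp_util_def)
            finally show ?thesis .
          next
            case False
            have "(\<Sum>c\<in>Ac n. q n c * T n (b(n := c)) th l) = (\<Sum>c\<in>Ac n. q n c) * T n b th l"
              using False by (simp add: T_def sum_distrib_right)
            also have "\<dots> = T n b th l" using qn by (simp add: is_dist_def)
            also have "\<dots> = T (Suc n) b th l" using False by (simp add: T_def)
            finally show ?thesis .
          qed
        qed
        finally show "(\<chi> th. \<Sum>l<k. T (Suc n) b th l) $ th = (\<Sum>c\<in>Ac n. q n c *\<^sub>R (\<chi> th. \<Sum>l<k. T n (b(n := c)) th l)) $ th"
          by simp
      qed
      show "(\<chi> th. \<Sum>l<k. T (Suc n) b th l) \<in> Dset A u"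
        unfolding eq
        using fin nk convex_Dset qn V by (intro convex_sum) (auto simp: is_dist_def)
    qed
  qed
  have "\<forall>l\<in>{..<k}. Ac l \<noteq> {}" using q dist_nonempty by auto
  then obtain b where b: "b \<in> PiE {..<k} Ac" by (metis PiE_eq_empty_iff ex_in_conv)
  have "(\<chi> th. \<Sum>l<k. T k b th l) \<in> Dset A u" using claim[of k] b by simp
  moreover have "(\<chi> th. \<Sum>l<k. T k b th l) = (\<chi> th. \<Sum>l<k. exp_util (Ac l) (uc l) th (q l))"
    by (simp add: T_def)
  ultimately show ?thesis by simp
qed

definition Sval :: "'b set \<Rightarrow> ('th::finite \<Rightarrow> 'b \<Rightarrow> real) \<Rightarrow> 'y set \<Rightarrow> ('th \<Rightarrow> 'y \<Rightarrow> real) \<Rightarrow> ('y \<Rightarrow> 'b \<Rightarrow> real) \<Rightarrow> real" where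
  "Sval B v Yx Px \<tau> = (\<Sum>th\<in>UNIV. \<Sum>y\<in>Yx. Px th y * exp_util B v th (\<tau> y))"

lemma Vsingle_alt: "Vsingle B v Yx Px = (SUP \<tau>\<in>strategies Yx B. Sval B v Yx Px \<tau>)"
  unfolding Vsingle_def Sval_def ..

lemma Sval_bdd:
  assumes "finite B" "is_experiment Yx Px"
  shows "bdd_above (Sval B v Yx Px ` strategies Yx B)"
proof (rule bdd_aboveI2)
  fix \<tau> assume \<tau>: "\<tau> \<in> strategies Yx B"
  have fY: "finite Yx" and dY: "\<And>th. is_dist Yx (Px th)" using assms(2) by (auto simp: is_experiment_def)
  have "\<bar>Sval B v Yx Px \<tau>\<bar> \<le> (\<Sum>th\<in>UNIV. \<bar>\<Sum>y\<in>Yx. Px th y * exp_util B v th (\<tau> y)\<bar>)"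
    unfolding Sval_def by (rule sum_abs)
  also have "\<dots> \<le> (\<Sum>th\<in>UNIV. \<Sum>b\<in>B. \<bar>v th b\<bar>)"
  proof (rule sum_mono)
    fix th
    show "\<bar>\<Sum>y\<in>Yx. Px th y * exp_util B v th (\<tau> y)\<bar> \<le> (\<Sum>b\<in>B. \<bar>v th b\<bar>)"
    proof (rule avg_bound[OF fY dY])
      fix y assume "y \<in> Yx"
      then have "is_dist B (\<tau> y)" using \<tau> by (auto simp: strategies_def)
      then show "\<bar>exp_util B v th (\<tau> y)\<bar> \<le> (\<Sum>b\<in>B. \<bar>v th b\<bar>)"
        by (rule exp_util_bound[OF assms(1)])
    qed
  qed
  finally show "Sval B v Yx Px \<tau> \<le> (\<Sum>th\<in>UNIV. \<Sum>b\<in>B. \<bar>v th b\<bar>)" by (simp add: abs_le_iff)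
qed

lemma Sval_le_Vsingle:
  assumes "finite B" "is_experiment Yx Px" "\<tau> \<in> strategies Yx B"
  shows "Sval B v Yx Px \<tau> \<le> Vsingle B v Yx Px"
  unfolding Vsingle_alt by (rule cSUP_upper[OF assms(3) Sval_bdd[OF assms(1,2)]])

lemma Vsingle_approx:
  assumes "finite B" "B \<noteq> {}" "is_experiment Yx Px" "0 < \<epsilon>"
  shows "\<exists>\<tau>\<in>strategies Yx B. Vsingle B v Yx Px - \<epsilon> < Sval B v Yx Px \<tau>"
proof (rule ccontr)
  assume "\<not> ?thesis"
  then have "\<forall>\<tau>\<in>strategies Yx B. Sval B v Yx Px \<tau> \<le> Vsingle B v Yx Px - \<epsilon>" by (auto simp: not_less)
  then have "Vsingle B v Yx Px \<le> Vsingle B v Yx Px - \<epsilon>"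
    unfolding Vsingle_alt[of B v Yx Px]
    using strategies_nonempty[OF assms(1,2)] by (intro cSUP_least) auto
  then show False using assms(4) by simp
qed



theorem theorem3:
  fixes A :: "'a set" and u :: "'th::finite \<Rightarrow> 'a \<Rightarrow> real"
    and m :: nat and Y :: "nat \<Rightarrow> 'y set" and Pj :: "nat \<Rightarrow> 'th \<Rightarrow> 'y \<Rightarrow> real"
  assumes "decision_problem A"
    and "m \<ge> 1"
    and "\<forall>j<m. is_experiment (Y j) (Pj j)"
  shows "\<exists>k\<ge>1. \<exists>(Ac :: nat \<Rightarrow> nat set) (uc :: nat \<Rightarrow> 'th \<Rightarrow> nat \<Rightarrow> real).
           weak_decomposition A u k Ac uc \<and>
           Vjoint A u m Y Pj = (\<Sum>l<k. Max ((\<lambda>j. Vsingle (Ac l) (uc l) (Y j) (Pj j)) ` {..<m}))"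
proof -
  note dp = assms(1) and m = assms(2) and exps = assms(3)
  have finA: "finite A" and Ane: "A \<noteq> {}" using dp by (auto simp: decision_problem_def)
  have finY: "\<And>j. j < m \<Longrightarrow> finite (Y j)" using exps by (auto simp: is_experiment_def)
  have dist: "\<And>j th. j < m \<Longrightarrow> is_dist (Y j) (Pj j th)" using exps by (auto simp: is_experiment_def)
  have Yne: "\<And>j. j < m \<Longrightarrow> Y j \<noteq> {}" using dist dist_nonempty by blast
  have finS: "finite (profiles m Y)" using finY by (rule finite_profiles)
  obtain w \<sigma> where \<sigma>: "\<sigma> \<in> strategies (profiles m Y) A"
    and dom: "\<forall>th. \<forall>ys\<in>profiles m Y. (\<Sum>j<m. w j th (ys j)) \<le> exp_util A u th (\<sigma> ys)"
    and vle: "Vjoint A u m Y Pj \<le> (\<Sum>j<m. \<Sum>th\<in>UNIV. \<Sum>y\<in>Y j. Pj j th y * w j th y)"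
    using main_exists[OF assms] by blast
  have "\<forall>l. \<exists>h. l < m \<longrightarrow> bij_betw h {..<card (Y l)} (Y l)"
  proof
    fix l
    show "\<exists>h. l < m \<longrightarrow> bij_betw h {..<card (Y l)} (Y l)"
    proof (cases "l < m")
      case True
      then obtain h where "bij_betw h {0..<card (Y l)} (Y l)" using ex_bij_betw_nat_finite finY by blast
      then show ?thesis by (auto simp: atLeast0LessThan)
    qed simp
  qed
  then obtain e where e: "\<And>l. l < m \<Longrightarrow> bij_betw (e l) {..<card (Y l)} (Y l)" by metis
  define Ac :: "nat \<Rightarrow> nat set" where "Ac = (\<lambda>l. {..<card (Y l)})"
  define uc :: "nat \<Rightarrow> 'th \<Rightarrow> nat \<Rightarrow> real" where "uc = (\<lambda>l th n. w l th (e l n))"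
  have finAc: "\<forall>l<m. finite (Ac l)" by (simp add: Ac_def)
  have AcNe: "Ac l \<noteq> {}" if "l < m" for l
  proof -
    have "0 < card (Y l)" using finY[OF that] Yne[OF that] by (simp add: card_gt_0_iff)
    then have "0 \<in> Ac l" by (simp add: Ac_def)
    then show ?thesis by blast
  qed
  have dpAc: "\<forall>l<m. decision_problem (Ac l)" using AcNe by (simp add: decision_problem_def Ac_def)
  have eim: "e l n \<in> Y l" if "l < m" "n \<in> Ac l" for l n
    using e[OF that(1)] that(2) unfolding Ac_def bij_betw_def by blast
  have pure: "\<forall>b\<in>PiE {..<m} Ac. (\<chi> th. \<Sum>l<m. uc l th (b l)) \<in> Dset A u"
  proof
    fix b assume b: "b \<in> PiE {..<m} Ac"
    define ys where "ys = (\<lambda>l. if l < m then e l (b l) else undefined)"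
    have ys: "ys \<in> profiles m Y" using b eim by (auto simp: ys_def profiles_def PiE_iff extensional_def)
    have "is_dist A (\<sigma> ys)" using \<sigma> ys by (simp add: strategies_def)
    moreover have "(\<Sum>l<m. uc l th (b l)) \<le> exp_util A u th (\<sigma> ys)" for th
    proof -
      have "(\<Sum>l<m. uc l th (b l)) = (\<Sum>l<m. w l th (ys l))" by (intro sum.cong) (auto simp: uc_def ys_def)
      then show ?thesis using dom ys by simp
    qed
    ultimately show "(\<chi> th. \<Sum>l<m. uc l th (b l)) \<in> Dset A u" unfolding Dset_def by auto
  qed
  have wd: "weak_decomposition A u m Ac uc"
    unfolding weak_decomposition_def
  proof (intro conjI dpAc subsetI)
    fix v assume v: "v \<in> Hset (comp_actions m Ac) (comp_util m uc)"
    have "(\<lambda>a. \<chi> th. comp_util m uc th a) ` comp_actions m Ac \<subseteq> Dset A u"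
      using pure by (auto simp: comp_util_def comp_actions_def)
    then have hull: "convex hull ((\<lambda>a. \<chi> th. comp_util m uc th a) ` comp_actions m Ac) \<subseteq> Dset A u"
      by (rule hull_minimal) (rule convex_Dset)
    obtain yv z where v': "v = yv - z" "yv \<in> convex hull ((\<lambda>a. \<chi> th. comp_util m uc th a) ` comp_actions m Ac)"
      "\<forall>th. 0 \<le> z $ th"
      using v unfolding Hset_def by blast
    then have "yv \<in> Dset A u" using hull by blast
    then obtain \<alpha> where \<alpha>: "is_dist A \<alpha>" "\<forall>th. yv $ th \<le> exp_util A u th \<alpha>" by (auto simp: Dset_def)
    have "\<forall>th. v $ th \<le> exp_util A u th \<alpha>" using \<alpha>(2) v'(1,3) by (auto intro: order_trans[rotated])
    then have "v \<in> Dset A u" using \<alpha>(1) by (auto simp: Dset_def)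
    then show "v \<in> Hset A u" using Dset_Hset[OF finA] by blast
  qed
  have fimg: "finite ((\<lambda>j. Vsingle (Ac l) (uc l) (Y j) (Pj j)) ` {..<m})" for l by simp
  have neimg: "(\<lambda>j. Vsingle (Ac l) (uc l) (Y j) (Pj j)) ` {..<m} \<noteq> {}" for l
  proof -
    have "0 \<in> {..<m}" using m by simp
    then show ?thesis by blast
  qed
  have lower: "Vjoint A u m Y Pj \<le> (\<Sum>l<m. Max ((\<lambda>j. Vsingle (Ac l) (uc l) (Y j) (Pj j)) ` {..<m}))"
  proof -
    have "(\<Sum>th\<in>UNIV. \<Sum>y\<in>Y l. Pj l th y * w l th y) \<le> Max ((\<lambda>j. Vsingle (Ac l) (uc l) (Y j) (Pj j)) ` {..<m})"
      if l: "l < m" for l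
    proof -
      define \<tau> where "\<tau> = (\<lambda>y n. if n = inv_into (Ac l) (e l) y then 1 else (0::real))"
      have bij: "bij_betw (e l) (Ac l) (Y l)" using e[OF l] by (simp add: Ac_def)
      have invin: "inv_into (Ac l) (e l) y \<in> Ac l" if "y \<in> Y l" for y
        using bij that by (metis bij_betw_def inv_into_into)
      have einv: "e l (inv_into (Ac l) (e l) y) = y" if "y \<in> Y l" for y
        using bij that by (metis bij_betw_def f_inv_into_f)
      have st: "\<tau> \<in> strategies (Y l) (Ac l)"
        unfolding strategies_def is_dist_def
      proof (intro CollectI ballI conjI allI impI)
        fix y n show "0 \<le> \<tau> y n" by (simp add: \<tau>_def)
      next
        fix y n assume "y \<in> Y l" "n \<notin> Ac l" then show "\<tau> y n = 0" using invin by (auto simp: \<tau>_def)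
      next
        fix y assume "y \<in> Y l" then show "sum (\<tau> y) (Ac l) = 1"
          using invin finAc l by (simp add: \<tau>_def sum.delta)
      qed
      have "Sval (Ac l) (uc l) (Y l) (Pj l) \<tau> = (\<Sum>th\<in>UNIV. \<Sum>y\<in>Y l. Pj l th y * w l th y)"
        unfolding Sval_def
      proof (rule sum.cong[OF refl], rule sum.cong[OF refl])
        fix th y assume y: "y \<in> Y l"
        have "exp_util (Ac l) (uc l) th (\<tau> y) = (\<Sum>n\<in>Ac l. if n = inv_into (Ac l) (e l) y then uc l th n else 0)"
          unfolding exp_util_def by (intro sum.cong) (auto simp: \<tau>_def)
        also have "\<dots> = w l th y" using invin[OF y] einv[OF y] finAc l by (simp add: sum.delta uc_def)
        finally show "Pj l th y * exp_util (Ac l) (uc l) th (\<tau> y) = Pj l th y * w l th y" by simp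
      qed
      then have "(\<Sum>th\<in>UNIV. \<Sum>y\<in>Y l. Pj l th y * w l th y) \<le> Vsingle (Ac l) (uc l) (Y l) (Pj l)"
        using Sval_le_Vsingle[of "Ac l" "Y l" "Pj l" \<tau> "uc l"] finAc l exps st by simp
      also have "\<dots> \<le> Max ((\<lambda>j. Vsingle (Ac l) (uc l) (Y j) (Pj j)) ` {..<m})"
        using l by (intro Max_ge[OF fimg]) auto
      finally show ?thesis .
    qed
    then have "(\<Sum>j<m. \<Sum>th\<in>UNIV. \<Sum>y\<in>Y j. Pj j th y * w j th y) \<le> (\<Sum>l<m. Max ((\<lambda>j. Vsingle (Ac l) (uc l) (Y j) (Pj j)) ` {..<m}))"
      by (intro sum_mono) auto
    then show ?thesis using vle by linarith
  qed
  have "\<forall>l. \<exists>j. l < m \<longrightarrow> j < m \<and> Max ((\<lambda>j. Vsingle (Ac l) (uc l) (Y j) (Pj j)) ` {..<m}) = Vsingle (Ac l) (uc l) (Y j) (Pj j)"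
  proof
    fix l
    have "Max ((\<lambda>j. Vsingle (Ac l) (uc l) (Y j) (Pj j)) ` {..<m}) \<in> (\<lambda>j. Vsingle (Ac l) (uc l) (Y j) (Pj j)) ` {..<m}"
      by (rule Max_in[OF fimg neimg])
    then show "\<exists>j. l < m \<longrightarrow> j < m \<and> Max ((\<lambda>j. Vsingle (Ac l) (uc l) (Y j) (Pj j)) ` {..<m}) = Vsingle (Ac l) (uc l) (Y j) (Pj j)"
      by auto
  qed
  then obtain J where J: "\<And>l. l < m \<Longrightarrow> J l < m"
    and JM: "\<And>l. l < m \<Longrightarrow> Max ((\<lambda>j. Vsingle (Ac l) (uc l) (Y j) (Pj j)) ` {..<m}) = Vsingle (Ac l) (uc l) (Y (J l)) (Pj (J l))"
    by metis
  have ub: "(\<Sum>l<m. Sval (Ac l) (uc l) (Y (J l)) (Pj (J l)) (\<tau> l)) \<le> Vjoint A u m Y Pj"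
    if \<tau>: "\<And>l. l < m \<Longrightarrow> \<tau> l \<in> strategies (Y (J l)) (Ac l)" for \<tau>
  proof -
    define G where "G = (\<lambda>l th s. exp_util (Ac l) (uc l) th (\<tau> l s))"
    have ex: "\<exists>\<alpha>. is_dist A \<alpha> \<and> (\<forall>th. (\<Sum>l<m. G l th (ys (J l))) \<le> exp_util A u th \<alpha>)"
      if ys: "ys \<in> profiles m Y" for ys
    proof -
      have q: "\<forall>l<m. is_dist (Ac l) (\<tau> l (ys (J l)))"
        using \<tau> J profiles_mem[OF ys] by (auto simp: strategies_def)
      have "(\<chi> th. \<Sum>l<m. exp_util (Ac l) (uc l) th (\<tau> l (ys (J l)))) \<in> Dset A u"
        by (rule mix[OF finAc q pure])
      then show ?thesis by (auto simp: Dset_def G_def)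
    qed
    define \<sigma>' where "\<sigma>' = (\<lambda>ys. SOME \<alpha>. is_dist A \<alpha> \<and> (\<forall>th. (\<Sum>l<m. G l th (ys (J l))) \<le> exp_util A u th \<alpha>))"
    have \<sigma>'P: "is_dist A (\<sigma>' ys) \<and> (\<forall>th. (\<Sum>l<m. G l th (ys (J l))) \<le> exp_util A u th (\<sigma>' ys))"
      if "ys \<in> profiles m Y" for ys
      unfolding \<sigma>'_def by (rule someI_ex[OF ex[OF that]])
    have \<sigma>'s: "\<sigma>' \<in> strategies (profiles m Y) A" using \<sigma>'P by (simp add: strategies_def)
    show ?thesis
    proof (rule Vjoint_ge[OF finA finS coupling_exists[OF exps] \<sigma>'s])
      fix P assume P: "P \<in> couplings m Y Pj"
      have "(\<Sum>l<m. Sval (Ac l) (uc l) (Y (J l)) (Pj (J l)) (\<tau> l))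
          = (\<Sum>th\<in>UNIV. \<Sum>l<m. \<Sum>s\<in>Y (J l). Pj (J l) th s * G l th s)"
        unfolding Sval_def G_def by (rule sum.swap)
      also have "\<dots> = (\<Sum>th\<in>UNIV. \<Sum>l<m. \<Sum>ys\<in>profiles m Y. P th ys * G l th (ys (J l)))"
        using marginal[OF P J finY] by simp
      also have "\<dots> = (\<Sum>th\<in>UNIV. \<Sum>ys\<in>profiles m Y. P th ys * (\<Sum>l<m. G l th (ys (J l))))"
        by (simp add: sum_distrib_left sum.swap[of _ "{..<m}"])
      also have "\<dots> \<le> (\<Sum>th\<in>UNIV. \<Sum>ys\<in>profiles m Y. P th ys * exp_util A u th (\<sigma>' ys))"
      proof (intro sum_mono mult_left_mono)
        fix th ys assume "ys \<in> profiles m Y"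
        then show "(\<Sum>l<m. G l th (ys (J l))) \<le> exp_util A u th (\<sigma>' ys)" using \<sigma>'P by blast
        show "0 \<le> P th ys" using coupling_dist[OF P] by (simp add: is_dist_def)
      qed
      also have "\<dots> = Fval A u m Y P \<sigma>'" by (simp add: Fval_def)
      finally show "(\<Sum>l<m. Sval (Ac l) (uc l) (Y (J l)) (Pj (J l)) (\<tau> l)) \<le> Fval A u m Y P \<sigma>'" .
    qed
  qed
  have upper: "(\<Sum>l<m. Max ((\<lambda>j. Vsingle (Ac l) (uc l) (Y j) (Pj j)) ` {..<m})) \<le> Vjoint A u m Y Pj"
  proof -
    have "(\<Sum>l<m. Max ((\<lambda>j. Vsingle (Ac l) (uc l) (Y j) (Pj j)) ` {..<m})) = (\<Sum>l<m. Vsingle (Ac l) (uc l) (Y (J l)) (Pj (J l)))"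
      using JM by simp
    also have "\<dots> \<le> Vjoint A u m Y Pj"
    proof (rule field_le_epsilon)
      fix \<epsilon> :: real assume \<epsilon>: "0 < \<epsilon>"
      have mpos: "0 < real m" using m by simp
      have "\<forall>l. \<exists>t. l < m \<longrightarrow> t \<in> strategies (Y (J l)) (Ac l) \<and>
          Vsingle (Ac l) (uc l) (Y (J l)) (Pj (J l)) - \<epsilon> / m < Sval (Ac l) (uc l) (Y (J l)) (Pj (J l)) t"
      proof
        fix l
        show "\<exists>t. l < m \<longrightarrow> t \<in> strategies (Y (J l)) (Ac l) \<and>
          Vsingle (Ac l) (uc l) (Y (J l)) (Pj (J l)) - \<epsilon> / m < Sval (Ac l) (uc l) (Y (J l)) (Pj (J l)) t"
        proof (cases "l < m")
          case True
          have "\<exists>t\<in>strategies (Y (J l)) (Ac l). Vsingle (Ac l) (uc l) (Y (J l)) (Pj (J l)) - \<epsilon> / m < Sval (Ac l) (uc l) (Y (J l)) (Pj (J l)) t"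
            using True finAc AcNe J exps \<epsilon> mpos by (intro Vsingle_approx) auto
          then show ?thesis by blast
        qed simp
      qed
      then obtain \<tau> where \<tau>: "\<And>l. l < m \<Longrightarrow> \<tau> l \<in> strategies (Y (J l)) (Ac l)"
        and \<tau>v: "\<And>l. l < m \<Longrightarrow> Vsingle (Ac l) (uc l) (Y (J l)) (Pj (J l)) - \<epsilon> / m < Sval (Ac l) (uc l) (Y (J l)) (Pj (J l)) (\<tau> l)"
        by metis
      have "(\<Sum>l<m. Vsingle (Ac l) (uc l) (Y (J l)) (Pj (J l))) \<le> (\<Sum>l<m. Sval (Ac l) (uc l) (Y (J l)) (Pj (J l)) (\<tau> l) + \<epsilon> / m)"
        using \<tau>v by (intro sum_mono) (simp add: less_imp_le algebra_simps)
      also have "\<dots> = (\<Sum>l<m. Sval (Ac l) (uc l) (Y (J l)) (Pj (J l)) (\<tau> l)) + \<epsilon>"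
        using mpos by (simp add: sum.distrib)
      also have "\<dots> \<le> Vjoint A u m Y Pj + \<epsilon>" using ub[OF \<tau>] by simp
      finally show "(\<Sum>l<m. Vsingle (Ac l) (uc l) (Y (J l)) (Pj (J l))) \<le> Vjoint A u m Y Pj + \<epsilon>" .
    qed
    finally show ?thesis .
  qed
  show ?thesis
    using m wd lower upper by (intro exI[of _ m] conjI exI[of _ Ac] exI[of _ uc]) auto
qed


end
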